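(* Fix $\lambda\in\Lambda$. Let $\mathcal R_\lambda\subset W_{\mathrm{aff}}$ be the set of affine reflections $$\mathcal R_\lambda=\bigcup_{\alpha\in\Phi^+}\begin{cases}\{s_{\alpha,k}: 0\ge k>-(\lambda,\alpha^\vee)\}&\text{if }(\lambda,\alpha^\vee)>0,\\ \{s_{\alpha,k}:0<k\le-(\lambda,\alpha^\vee)\}&\text{if }(\lambda,\alpha^\vee)<0,\\ \emptyset&\text{if }(\lambda,\alpha^\vee)=0,\end{cases}$$ and let $h:\mathcal R_\lambda\to\mathbb R^{r+1}$ be $h(s_{\alpha,k})=(\lambda,\alpha^\vee)^{-1}\big(-k,(\omega_1,\alpha^\vee),\dots,(\omega_r,\alpha^\vee)\big)$ for $\alpha\in\Phi^+$. Then $h$ is injective; and if $\mathcal R_\lambda=\{r_1,\dots,r_l\}$ is ordered so that $h(r_1)<\dots<h(r_l)$ lexicographically, then $(r_1,\dots,r_l)$ is the $\lambda$-chain of reflections and $(b(r_1),\dots,b(r_l))$ is the $\lambda$-chain of roots associated with some reduced decomposition of $v_{-\lambda}$, where $b(s_{\alpha,k})=\alpha$ if $k\le0$ and $b(s_{\alpha,k})=-\alpha$ if $k>0$ (for $\alpha\in\Phi^+$).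
   Context: $\Phi$ is an irreducible root system with positive roots $\Phi^+$, simple roots $\alpha_1,\dots,\alpha_r$, coroots $\alpha^\vee=2\alpha/(\alpha,\alpha)$, fundamental weights $\omega_i$ ($(\omega_i,\alpha_j^\vee)=\delta_{ij}$), weight lattice $\Lambda$, Weyl group $W$. For $\alpha\in\Phi,k\in\mathbb Z$: $s_{\alpha,k}(\lambda)=\lambda-((\lambda,\alpha^\vee)-k)\alpha$ (note $s_{\alpha,k}=s_{-\alpha,-k}$). $W_{\mathrm{aff}}$ is generated by $s_0=s_{\alpha_0,-1}$ ($\alpha_0=-\theta$, $\theta^\vee$ the highest coroot) and $s_i=s_{\alpha_i,0}$; $\bar v\in W$ is the linear part of $v$. $A_\circ=\{\lambda:0<(\lambda,\alpha^\vee)<1\ \forall\alpha\in\Phi^+\}$; $v_{-\lambda}$ is the unique element of $W_{\mathrm{aff}}$ with $v_{-\lambda}(A_\circ)=A_\circ-\lambda$. For a decomposition $v_{-\lambda}=s_{i_1}\cdots s_{i_l}$: the $\lambda$-chain of roots is $\beta_j=\bar s_{i_1}\cdots\bar s_{i_{j-1}}(\alpha_{i_j})$ and the $\lambda$-chain of reflections is $r_j=s_{i_1}\cdots s_{i_{j-1}}s_{i_j}s_{i_{j-1}}\cdots s_{i_1}$. *)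

theory Defs
  imports "HOL-Analysis.Analysis"
begin

definition coroot :: "'a::real_inner \<Rightarrow> 'a" where
  "coroot \<alpha> = (2 / (\<alpha> \<bullet> \<alpha>)) *\<^sub>R \<alpha>"

definition pairing :: "'a::real_inner \<Rightarrow> 'a \<Rightarrow> real" where
  "pairing lam \<alpha> = lam \<bullet> coroot \<alpha>"

definition saff :: "'a::real_inner \<Rightarrow> real \<Rightarrow> 'a \<Rightarrow> 'a" where
  "saff \<alpha> k = (\<lambda>lam. lam - (pairing lam \<alpha> - k) *\<^sub>R \<alpha>)"

definition root_system :: "'a::euclidean_space set \<Rightarrow> bool" where
  "root_system \<Phi> \<longleftrightarrow> finite \<Phi> \<and> 0 \<notin> \<Phi> \<and> span \<Phi> = UNIV \<and>
     (\<forall>\<alpha>\<in>\<Phi>. \<forall>\<beta>\<in>\<Phi>. saff \<alpha> 0 \<beta> \<in> \<Phi>) \<and>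
     (\<forall>\<alpha>\<in>\<Phi>. \<forall>\<beta>\<in>\<Phi>. pairing \<beta> \<alpha> \<in> \<int>) \<and>
     (\<forall>\<alpha>\<in>\<Phi>. \<forall>c::real. c *\<^sub>R \<alpha> \<in> \<Phi> \<longrightarrow> c = 1 \<or> c = -1)"

definition irreducible_rs :: "'a::euclidean_space set \<Rightarrow> bool" where
  "irreducible_rs \<Phi> \<longleftrightarrow> \<Phi> \<noteq> {} \<and>
     \<not> (\<exists>\<Phi>1 \<Phi>2. \<Phi>1 \<noteq> {} \<and> \<Phi>2 \<noteq> {} \<and> \<Phi>1 \<union> \<Phi>2 = \<Phi> \<and>
            (\<forall>\<alpha>\<in>\<Phi>1. \<forall>\<beta>\<in>\<Phi>2. \<alpha> \<bullet> \<beta> = 0))"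

definition is_base :: "'a::euclidean_space set \<Rightarrow> (nat \<Rightarrow> 'a) \<Rightarrow> nat \<Rightarrow> bool" where
  "is_base \<Phi> \<alpha> r \<longleftrightarrow> (\<forall>i\<in>{1..r}. \<alpha> i \<in> \<Phi>) \<and> inj_on \<alpha> {1..r} \<and>
     independent (\<alpha> ` {1..r}) \<and>
     (\<forall>\<beta>\<in>\<Phi>. \<exists>c::nat \<Rightarrow> int. \<beta> = (\<Sum>i=1..r. of_int (c i) *\<^sub>R \<alpha> i) \<and>
        ((\<forall>i\<in>{1..r}. c i \<ge> 0) \<or> (\<forall>i\<in>{1..r}. c i \<le> 0)))"

definition pos_roots :: "'a::euclidean_space set \<Rightarrow> (nat \<Rightarrow> 'a) \<Rightarrow> nat \<Rightarrow> 'a set" where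
  "pos_roots \<Phi> \<alpha> r = {\<beta>\<in>\<Phi>. \<exists>c::nat \<Rightarrow> real. (\<forall>i\<in>{1..r}. c i \<ge> 0) \<and>
                                 \<beta> = (\<Sum>i=1..r. c i *\<^sub>R \<alpha> i)}"

definition highest_coroot_root :: "'a::euclidean_space set \<Rightarrow> (nat \<Rightarrow> 'a) \<Rightarrow> nat \<Rightarrow> 'a \<Rightarrow> bool" where
  "highest_coroot_root \<Phi> \<alpha> r \<theta> \<longleftrightarrow> \<theta> \<in> pos_roots \<Phi> \<alpha> r \<and>
     (\<forall>\<beta>\<in>pos_roots \<Phi> \<alpha> r. \<exists>c::nat \<Rightarrow> real. (\<forall>i\<in>{1..r}. c i \<ge> 0) \<and>
        coroot \<theta> - coroot \<beta> = (\<Sum>i=1..r. c i *\<^sub>R coroot (\<alpha> i)))"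

definition weight_lattice :: "'a::euclidean_space set \<Rightarrow> 'a set" where
  "weight_lattice \<Phi> = {lam. \<forall>\<alpha>\<in>\<Phi>. pairing lam \<alpha> \<in> \<int>}"

definition root_idx :: "(nat \<Rightarrow> 'a::real_inner) \<Rightarrow> 'a \<Rightarrow> nat \<Rightarrow> 'a" where
  "root_idx \<alpha> \<theta> i = (if i = 0 then - \<theta> else \<alpha> i)"

definition sgen :: "(nat \<Rightarrow> 'a::real_inner) \<Rightarrow> 'a \<Rightarrow> nat \<Rightarrow> 'a \<Rightarrow> 'a" where
  "sgen \<alpha> \<theta> i = (if i = 0 then saff (- \<theta>) (-1) else saff (\<alpha> i) 0)"

definition sbar :: "(nat \<Rightarrow> 'a::real_inner) \<Rightarrow> 'a \<Rightarrow> nat \<Rightarrow> 'a \<Rightarrow> 'a" where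
  "sbar \<alpha> \<theta> i = saff (root_idx \<alpha> \<theta> i) 0"

definition wprod :: "(nat \<Rightarrow> 'a::real_inner) \<Rightarrow> 'a \<Rightarrow> nat list \<Rightarrow> 'a \<Rightarrow> 'a" where
  "wprod \<alpha> \<theta> w = foldr (\<circ>) (map (sgen \<alpha> \<theta>) w) id"

definition wbarprod :: "(nat \<Rightarrow> 'a::real_inner) \<Rightarrow> 'a \<Rightarrow> nat list \<Rightarrow> 'a \<Rightarrow> 'a" where
  "wbarprod \<alpha> \<theta> w = foldr (\<circ>) (map (sbar \<alpha> \<theta>) w) id"

definition W_aff :: "(nat \<Rightarrow> 'a::real_inner) \<Rightarrow> 'a \<Rightarrow> nat \<Rightarrow> ('a \<Rightarrow> 'a) set" where
  "W_aff \<alpha> \<theta> r = {wprod \<alpha> \<theta> w | w. set w \<subseteq> {0..r}}"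

definition fund_alcove :: "'a::euclidean_space set \<Rightarrow> (nat \<Rightarrow> 'a) \<Rightarrow> nat \<Rightarrow> 'a set" where
  "fund_alcove \<Phi> \<alpha> r = {lam. \<forall>\<beta>\<in>pos_roots \<Phi> \<alpha> r. 0 < pairing lam \<beta> \<and> pairing lam \<beta> < 1}"

definition v_minus :: "'a::euclidean_space set \<Rightarrow> (nat \<Rightarrow> 'a) \<Rightarrow> nat \<Rightarrow> 'a \<Rightarrow> 'a \<Rightarrow> 'a \<Rightarrow> 'a" where
  "v_minus \<Phi> \<alpha> r \<theta> lam = (THE v. v \<in> W_aff \<alpha> \<theta> r \<and>
      v ` fund_alcove \<Phi> \<alpha> r = (\<lambda>x. x - lam) ` fund_alcove \<Phi> \<alpha> r)"

definition reduced_decomp :: "(nat \<Rightarrow> 'a::real_inner) \<Rightarrow> 'a \<Rightarrow> nat \<Rightarrow> ('a \<Rightarrow> 'a) \<Rightarrow> nat list \<Rightarrow> bool" where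
  "reduced_decomp \<alpha> \<theta> r v w \<longleftrightarrow> set w \<subseteq> {0..r} \<and> wprod \<alpha> \<theta> w = v \<and>
     (\<forall>w'. set w' \<subseteq> {0..r} \<and> wprod \<alpha> \<theta> w' = v \<longrightarrow> length w \<le> length w')"

definition chain_refl :: "(nat \<Rightarrow> 'a::real_inner) \<Rightarrow> 'a \<Rightarrow> nat list \<Rightarrow> ('a \<Rightarrow> 'a) list" where
  "chain_refl \<alpha> \<theta> w = map (\<lambda>j. wprod \<alpha> \<theta> (take (Suc j) w @ rev (take j w))) [0..<length w]"

definition chain_roots :: "(nat \<Rightarrow> 'a::real_inner) \<Rightarrow> 'a \<Rightarrow> nat list \<Rightarrow> 'a list" where
  "chain_roots \<alpha> \<theta> w = map (\<lambda>j. wbarprod \<alpha> \<theta> (take j w) (root_idx \<alpha> \<theta> (w ! j))) [0..<length w]"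

text \<open>R_lambda, parametrised by pairs (alpha,k) with alpha positive: (alpha,k) stands for s_{alpha,k}.\<close>
definition R_pairs :: "'a::euclidean_space set \<Rightarrow> (nat \<Rightarrow> 'a) \<Rightarrow> nat \<Rightarrow> 'a \<Rightarrow> ('a \<times> int) set" where
  "R_pairs \<Phi> \<alpha> r lam = {(\<beta>, k). \<beta> \<in> pos_roots \<Phi> \<alpha> r \<and>
     ((pairing lam \<beta> > 0 \<and> 0 \<ge> k \<and> real_of_int k > - pairing lam \<beta>) \<or>
      (pairing lam \<beta> < 0 \<and> 0 < k \<and> real_of_int k \<le> - pairing lam \<beta>))}"

definition R_lambda :: "'a::euclidean_space set \<Rightarrow> (nat \<Rightarrow> 'a) \<Rightarrow> nat \<Rightarrow> 'a \<Rightarrow> ('a \<Rightarrow> 'a) set" where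
  "R_lambda \<Phi> \<alpha> r lam = (\<lambda>(\<beta>, k). saff \<beta> (of_int k)) ` R_pairs \<Phi> \<alpha> r lam"

text \<open>h(s_{alpha,k}) as a vector in R^(r+1), represented by a real list of length r+1.\<close>
definition hmap :: "(nat \<Rightarrow> 'a::real_inner) \<Rightarrow> nat \<Rightarrow> 'a \<Rightarrow> 'a \<times> int \<Rightarrow> real list" where
  "hmap \<omega> r lam p = (case p of (\<beta>, k) \<Rightarrow>
      map (\<lambda>x. x / pairing lam \<beta>) (- real_of_int k # map (\<lambda>i. pairing (\<omega> i) \<beta>) [1..<Suc r]))"

definition bmap :: "'a::real_inner \<times> int \<Rightarrow> 'a" where
  "bmap p = (case p of (\<beta>, k) \<Rightarrow> if k \<le> 0 then \<beta> else - \<beta>)"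

text \<open>Strict lexicographic order on real lists (used on lists of equal length r+1).\<close>
definition lex_less :: "real list \<Rightarrow> real list \<Rightarrow> bool" where
  "lex_less xs ys \<longleftrightarrow> (xs, ys) \<in> lexord {(x, y). x < y}"

end

theory Submission
  imports Defs
begin


lemma coroot_neg[simp]: "coroot (- a) = - coroot (a::'a::real_inner)"
  by (simp add: coroot_def)

lemma pairing_add: "pairing (x + y) a = pairing x a + pairing y a"
  by (simp add: pairing_def inner_add_left)
lemma pairing_diff: "pairing (x - y) a = pairing x a - pairing y a"
  by (simp add: pairing_def inner_diff_left)
lemma pairing_scale: "pairing (c *\<^sub>R x) a = c * pairing x a"
  by (simp add: pairing_def)
lemma pairing_uminus1: "pairing (- x) a = - pairing x a"
  by (simp add: pairing_def)
lemma pairing_uminus2: "pairing x (- a) = - pairing x a"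
  by (simp add: pairing_def)
lemma pairing_zero1[simp]: "pairing 0 a = 0"
  by (simp add: pairing_def)
lemma pairing_self: "a \<noteq> 0 \<Longrightarrow> pairing a a = 2"
  by (simp add: pairing_def coroot_def)
lemma pairing_alt: "pairing x a = 2 * (x \<bullet> a) / (a \<bullet> a)"
  by (simp add: pairing_def coroot_def)

lemma saff_neg: "saff (- a) (- k) = saff a k"
  by (rule ext) (simp add: saff_def pairing_uminus2 algebra_simps)

lemma saff_apply: "saff a k x = x - (pairing x a - k) *\<^sub>R a"
  by (simp add: saff_def)

lemma saff_split: "saff a k x = saff a 0 x + k *\<^sub>R a"
  by (simp add: saff_def algebra_simps)

lemma pairing_saff_self: "a \<noteq> 0 \<Longrightarrow> pairing (saff a k x) a = 2 * k - pairing x a"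
  by (simp add: saff_def pairing_diff pairing_scale pairing_self)

lemma saff_invol: "a \<noteq> 0 \<Longrightarrow> saff a k (saff a k x) = x"
proof -
  assume a: "a \<noteq> 0"
  have "saff a k (saff a k x) = saff a k x - (2 * k - pairing x a - k) *\<^sub>R a"
    using a by (simp add: saff_apply[of a k "saff a k x"] pairing_saff_self)
  also have "\<dots> = x" by (simp add: saff_apply algebra_simps)
  finally show ?thesis .
qed

lemma saff_invol_comp: "a \<noteq> 0 \<Longrightarrow> saff a k \<circ> saff a k = id"
  by (rule ext) (simp add: saff_invol)

lemma saff_fix: "pairing x a = k \<Longrightarrow> saff a k x = x"
  by (simp add: saff_def)

lemma linear_saff0: "linear (saff a 0)"
  unfolding saff_def pairing_def
  by (auto intro!: linearI simp: inner_add_left algebra_simps)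

lemma saff0_inner: "a \<noteq> 0 \<Longrightarrow> saff a 0 x \<bullet> saff a 0 y = x \<bullet> (y::'a::real_inner)"
  unfolding saff_def pairing_def coroot_def
  by (simp add: inner_diff_left inner_diff_right inner_commute field_simps)

definition iso :: "('a::real_inner \<Rightarrow> 'a) \<Rightarrow> bool" where
  "iso L \<longleftrightarrow> linear L \<and> (\<forall>x y. L x \<bullet> L y = x \<bullet> y)"

lemma iso_id: "iso id" by (simp add: iso_def linear_iff)
lemma iso_comp: "iso L \<Longrightarrow> iso M \<Longrightarrow> iso (L \<circ> M)"
  by (auto simp: iso_def linear_compose)
lemma iso_saff0: "a \<noteq> 0 \<Longrightarrow> iso (saff a 0)"
  by (simp add: iso_def linear_saff0 saff0_inner)

lemma iso_inj: "iso L \<Longrightarrow> inj L"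
proof (rule injI)
  fix x y assume L: "iso L" and e: "L x = L y"
  have "L (x - y) = 0" using L e by (simp add: iso_def linear_diff)
  then have "L (x - y) \<bullet> L (x - y) = 0" by simp
  then have "(x - y) \<bullet> (x - y) = 0" using L unfolding iso_def by metis
  then show "x = y" by simp
qed

lemma iso_coroot: "iso L \<Longrightarrow> coroot (L a) = L (coroot a)"
  by (simp add: iso_def coroot_def linear_scale)

lemma iso_pairing: "iso L \<Longrightarrow> pairing (L x) (L a) = pairing x a"
  by (simp add: iso_coroot pairing_def iso_def)

lemma iso_conj:
  assumes L: "iso L" and g: "\<And>x. g x = L x + b" and a: "a \<noteq> 0"
  shows "g (saff a m x) = saff (L a) (m + pairing b (L a)) (g x)"
proof -
  have "g (saff a m x) = L x + b - (pairing x a - m) *\<^sub>R L a"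
    using L by (simp add: g saff_apply iso_def linear_diff linear_scale)
  also have "\<dots> = saff (L a) (m + pairing b (L a)) (g x)"
    using L by (simp add: g saff_apply pairing_add iso_pairing)
  finally show ?thesis .
qed



lemma coroot_coroot: "a \<noteq> 0 \<Longrightarrow> coroot (coroot a) = (a::'a::real_inner)"
  by (simp add: coroot_def field_simps)

lemma coroot_eq_0: "coroot a = 0 \<longleftrightarrow> a = (0::'a::real_inner)"
  by (simp add: coroot_def)

lemma int_cases01:
  fixes v :: real and m :: int
  assumes "0 < v" "v < 1"
  shows "v > of_int m \<longleftrightarrow> m \<le> 0"
proof
  assume "v > of_int m" then have "of_int m < (1::real)" using assms by simp
  then show "m \<le> 0" by simp
next
  assume "m \<le> 0" then have "of_int m \<le> (0::real)" by simp
  then show "v > of_int m" using assms by simp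
qed

locale RS =
  fixes \<Phi> :: "'a::euclidean_space set" and \<alpha> \<omega> :: "nat \<Rightarrow> 'a" and r :: nat and \<theta> :: 'a
  assumes rs: "root_system \<Phi>" and base: "is_base \<Phi> \<alpha> r"
    and dual: "\<forall>i\<in>{1..r}. \<forall>j\<in>{1..r}. pairing (\<omega> i) (\<alpha> j) = (if i = j then 1 else 0)"
    and high: "highest_coroot_root \<Phi> \<alpha> r \<theta>"
begin

abbreviation "P \<equiv> pos_roots \<Phi> \<alpha> r"
abbreviation "A \<equiv> fund_alcove \<Phi> \<alpha> r"

lemma finPhi: "finite \<Phi>" using rs by (simp add: root_system_def)
lemma zero_notin: "0 \<notin> \<Phi>" using rs by (simp add: root_system_def)
lemma nz: "\<beta> \<in> \<Phi> \<Longrightarrow> \<beta> \<noteq> 0" using zero_notin by auto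
lemma refl_closed: "a \<in> \<Phi> \<Longrightarrow> b \<in> \<Phi> \<Longrightarrow> saff a 0 b \<in> \<Phi>"
  using rs by (simp add: root_system_def)
lemma integ: "a \<in> \<Phi> \<Longrightarrow> b \<in> \<Phi> \<Longrightarrow> pairing b a \<in> \<int>"
  using rs by (simp add: root_system_def)
lemma reduced: "a \<in> \<Phi> \<Longrightarrow> c *\<^sub>R a \<in> \<Phi> \<Longrightarrow> c = 1 \<or> c = -1"
  using rs by (simp add: root_system_def)
lemma spanPhi: "span \<Phi> = UNIV" using rs by (simp add: root_system_def)

lemma neg_root: "a \<in> \<Phi> \<Longrightarrow> - a \<in> \<Phi>"
proof -
  assume a: "a \<in> \<Phi>"
  have "saff a 0 a = a - 2 *\<^sub>R a" using nz[OF a] by (simp add: saff_apply pairing_self)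
  also have "\<dots> = - a" by (simp add: scaleR_2)
  finally have "saff a 0 a = - a" .
  then show ?thesis using refl_closed[OF a a] by simp
qed

lemma alpha_in: "i \<in> {1..r} \<Longrightarrow> \<alpha> i \<in> \<Phi>"
  using base by (simp add: is_base_def)

lemma pos_sub: "P \<subseteq> \<Phi>" by (auto simp: pos_roots_def)

lemma span_alpha: "span (\<alpha> ` {1..r}) = UNIV"
proof -
  have "\<Phi> \<subseteq> span (\<alpha> ` {1..r})"
  proof
    fix \<beta> assume b: "\<beta> \<in> \<Phi>"
    then obtain c :: "nat \<Rightarrow> int" where "\<beta> = (\<Sum>i=1..r. of_int (c i) *\<^sub>R \<alpha> i)"
      using base by (auto simp: is_base_def)
    then show "\<beta> \<in> span (\<alpha> ` {1..r})"
      by (metis (no_types, lifting) imageI span_base span_scale span_sum)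
  qed
  then have "span \<Phi> \<subseteq> span (\<alpha> ` {1..r})" by (simp add: span_minimal)
  then show ?thesis using spanPhi by auto
qed

lemma omega_coroot: "i \<in> {1..r} \<Longrightarrow> j \<in> {1..r} \<Longrightarrow> \<omega> i \<bullet> coroot (\<alpha> j) = (if i = j then 1 else 0)"
  using dual by (simp add: pairing_def)

lemma alpha_nz: "i \<in> {1..r} \<Longrightarrow> \<alpha> i \<noteq> 0"
  using nz alpha_in by auto

lemma omega_alpha: "i \<in> {1..r} \<Longrightarrow> j \<in> {1..r} \<Longrightarrow>
   \<omega> i \<bullet> \<alpha> j = (if i = j then (\<alpha> j \<bullet> \<alpha> j) / 2 else 0)"
proof -
  assume i: "i \<in> {1..r}" and j: "j \<in> {1..r}"
  have "\<alpha> j = ((\<alpha> j \<bullet> \<alpha> j) / 2) *\<^sub>R coroot (\<alpha> j)"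
    using alpha_nz[OF j] by (simp add: coroot_def)
  then have "\<omega> i \<bullet> \<alpha> j = ((\<alpha> j \<bullet> \<alpha> j) / 2) * (\<omega> i \<bullet> coroot (\<alpha> j))"
    by (metis inner_scaleR_right)
  then show ?thesis using omega_coroot[OF i j] by (cases "i = j") auto
qed

lemma omega_sum_coroot:
  assumes j: "j \<in> {1..r}"
  shows "\<omega> j \<bullet> (\<Sum>i=1..r. c i *\<^sub>R coroot (\<alpha> i)) = c j"
proof -
  have "\<omega> j \<bullet> (\<Sum>i=1..r. c i *\<^sub>R coroot (\<alpha> i)) = (\<Sum>i=1..r. c i * (\<omega> j \<bullet> coroot (\<alpha> i)))"
    by (simp add: inner_sum_right)
  also have "\<dots> = (\<Sum>i=1..r. if i = j then c i else 0)"
  proof (rule sum.cong)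
    fix i assume i: "i \<in> {1..r}"
    show "c i * (\<omega> j \<bullet> coroot (\<alpha> i)) = (if i = j then c i else 0)"
      using omega_coroot[OF j i] by (cases "i = j") auto
  qed simp
  also have "\<dots> = c j" using j by simp
  finally show ?thesis .
qed

lemma omega_sum_alpha:
  assumes j: "j \<in> {1..r}"
  shows "\<omega> j \<bullet> (\<Sum>i=1..r. c i *\<^sub>R \<alpha> i) = c j * ((\<alpha> j \<bullet> \<alpha> j) / 2)"
proof -
  have "\<omega> j \<bullet> (\<Sum>i=1..r. c i *\<^sub>R \<alpha> i) = (\<Sum>i=1..r. c i * (\<omega> j \<bullet> \<alpha> i))"
    by (simp add: inner_sum_right)
  also have "\<dots> = (\<Sum>i=1..r. if i = j then c i * ((\<alpha> j \<bullet> \<alpha> j) / 2) else 0)"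
  proof (rule sum.cong)
    fix i assume i: "i \<in> {1..r}"
    show "c i * (\<omega> j \<bullet> \<alpha> i) = (if i = j then c i * ((\<alpha> j \<bullet> \<alpha> j) / 2) else 0)"
      using omega_alpha[OF j i] by (cases "i = j") auto
  qed simp
  also have "\<dots> = c j * ((\<alpha> j \<bullet> \<alpha> j) / 2)" using j by simp
  finally show ?thesis .
qed

lemma alpha_inj: "inj_on \<alpha> {1..r}" using base by (simp add: is_base_def)

lemma expand_alpha: "\<exists>u. v = (\<Sum>i=1..r. u i *\<^sub>R \<alpha> i)"
proof -
  have "v \<in> span (\<alpha> ` {1..r})" using span_alpha by auto
  then obtain u where "v = (\<Sum>a\<in>\<alpha> ` {1..r}. u a *\<^sub>R a)"
    using span_finite[of "\<alpha> ` {1..r}"] by auto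
  also have "\<dots> = (\<Sum>i=1..r. u (\<alpha> i) *\<^sub>R \<alpha> i)"
    using sum.reindex[OF alpha_inj, of "\<lambda>a. u a *\<^sub>R a"] by (simp add: comp_def)
  finally show ?thesis by (intro exI[of _ "\<lambda>i. u (\<alpha> i)"])
qed

lemma expand: "v = (\<Sum>i=1..r. (\<omega> i \<bullet> v) *\<^sub>R coroot (\<alpha> i))"
proof -
  obtain u where u: "v = (\<Sum>i=1..r. u i *\<^sub>R \<alpha> i)" using expand_alpha by blast
  have "v = (\<Sum>i=1..r. (u i * ((\<alpha> i \<bullet> \<alpha> i) / 2)) *\<^sub>R coroot (\<alpha> i))"
    unfolding u
  proof (rule sum.cong)
    fix i assume i: "i \<in> {1..r}"
    show "u i *\<^sub>R \<alpha> i = (u i * ((\<alpha> i \<bullet> \<alpha> i) / 2)) *\<^sub>R coroot (\<alpha> i)"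
      using alpha_nz[OF i] by (simp add: coroot_def)
  qed simp
  also have "\<dots> = (\<Sum>i=1..r. (\<omega> i \<bullet> v) *\<^sub>R coroot (\<alpha> i))"
  proof (rule sum.cong)
    fix i assume i: "i \<in> {1..r}"
    show "(u i * ((\<alpha> i \<bullet> \<alpha> i) / 2)) *\<^sub>R coroot (\<alpha> i) = (\<omega> i \<bullet> v) *\<^sub>R coroot (\<alpha> i)"
      using omega_sum_alpha[OF i, of u] u by simp
  qed simp
  finally show ?thesis .
qed

definition co :: "'a \<Rightarrow> nat \<Rightarrow> real" where "co \<beta> i = pairing (\<omega> i) \<beta>"

lemma coroot_expand: "coroot \<beta> = (\<Sum>i=1..r. co \<beta> i *\<^sub>R coroot (\<alpha> i))"
  using expand[of "coroot \<beta>"] by (simp add: co_def pairing_def)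

lemma co_eq_imp:
  assumes "\<beta> \<noteq> 0" "\<gamma> \<noteq> 0" "\<forall>i\<in>{1..r}. co \<beta> i = co \<gamma> i"
  shows "\<beta> = \<gamma>"
proof -
  have "coroot \<beta> = coroot \<gamma>"
  proof -
    have "(\<Sum>i=1..r. co \<beta> i *\<^sub>R coroot (\<alpha> i)) = (\<Sum>i=1..r. co \<gamma> i *\<^sub>R coroot (\<alpha> i))"
      using assms(3) by (intro sum.cong) auto
    then show ?thesis using coroot_expand[of \<beta>] coroot_expand[of \<gamma>] by simp
  qed
  then show ?thesis using coroot_coroot assms(1,2) by metis
qed

lemma co_nz: "\<beta> \<noteq> 0 \<Longrightarrow> \<exists>i\<in>{1..r}. co \<beta> i \<noteq> 0"
proof (rule ccontr)
  assume b: "\<beta> \<noteq> 0" and n: "\<not> (\<exists>i\<in>{1..r}. co \<beta> i \<noteq> 0)"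
  have "(\<Sum>i=1..r. co \<beta> i *\<^sub>R coroot (\<alpha> i)) = 0"
  proof (rule sum.neutral, rule ballI)
    fix i assume "i \<in> {1..r}"
    then have "co \<beta> i = 0" using n by blast
    then show "co \<beta> i *\<^sub>R coroot (\<alpha> i) = 0" by simp
  qed
  then have "coroot \<beta> = 0" by (subst coroot_expand)
  then show False using b by (simp add: coroot_eq_0)
qed

lemma co_neg: "co (- \<beta>) i = - co \<beta> i"
  by (simp add: co_def pairing_uminus2)

lemma co_alpha: "i \<in> {1..r} \<Longrightarrow> j \<in> {1..r} \<Longrightarrow> co (\<alpha> j) i = (if i = j then 1 else 0)"
  using dual by (simp add: co_def)

lemma co_dot: "co \<beta> i = (2 / (\<beta> \<bullet> \<beta>)) * (\<omega> i \<bullet> \<beta>)"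
  by (simp add: co_def pairing_alt inner_commute)

lemma co_sign_iff: "\<beta> \<noteq> 0 \<Longrightarrow> (co \<beta> i \<ge> 0 \<longleftrightarrow> \<omega> i \<bullet> \<beta> \<ge> 0) \<and> (co \<beta> i \<le> 0 \<longleftrightarrow> \<omega> i \<bullet> \<beta> \<le> 0)"
proof -
  assume "\<beta> \<noteq> 0"
  then have p: "2 / (\<beta> \<bullet> \<beta>) > 0" by simp
  have a: "co \<beta> i = (2 / (\<beta> \<bullet> \<beta>)) * (\<omega> i \<bullet> \<beta>)" by (rule co_dot)
  have 1: "(0 \<le> (2 / (\<beta> \<bullet> \<beta>)) * (\<omega> i \<bullet> \<beta>)) = (0 \<le> \<omega> i \<bullet> \<beta>)"
    using mult_le_cancel_left_pos[OF p, of 0 "\<omega> i \<bullet> \<beta>"] by simp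
  have 2: "((2 / (\<beta> \<bullet> \<beta>)) * (\<omega> i \<bullet> \<beta>) \<le> 0) = (\<omega> i \<bullet> \<beta> \<le> 0)"
    using mult_le_cancel_left_pos[OF p, of "\<omega> i \<bullet> \<beta>" 0] by simp
  show ?thesis unfolding a using 1 2 by blast
qed

lemma root_sign: "\<beta> \<in> \<Phi> \<Longrightarrow> (\<forall>i\<in>{1..r}. co \<beta> i \<ge> 0) \<or> (\<forall>i\<in>{1..r}. co \<beta> i \<le> 0)"
proof -
  assume b: "\<beta> \<in> \<Phi>"
  then obtain c :: "nat \<Rightarrow> int" where c: "\<beta> = (\<Sum>i=1..r. of_int (c i) *\<^sub>R \<alpha> i)"
    and s: "(\<forall>i\<in>{1..r}. c i \<ge> 0) \<or> (\<forall>i\<in>{1..r}. c i \<le> 0)"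
    using base by (auto simp: is_base_def)
  have w: "\<omega> i \<bullet> \<beta> = of_int (c i) * ((\<alpha> i \<bullet> \<alpha> i) / 2)" if "i \<in> {1..r}" for i
    using omega_sum_alpha[OF that, of "\<lambda>i. of_int (c i)"] c by simp
  have pos: "(\<alpha> i \<bullet> \<alpha> i) / 2 > 0" if "i \<in> {1..r}" for i using alpha_nz[OF that] by simp
  from s show ?thesis
  proof
    assume "\<forall>i\<in>{1..r}. c i \<ge> 0"
    then have "\<forall>i\<in>{1..r}. \<omega> i \<bullet> \<beta> \<ge> 0"
    proof (intro ballI)
      fix i assume i: "i \<in> {1..r}" and h: "\<forall>i\<in>{1..r}. c i \<ge> 0"
      then have "c i \<ge> 0" by blast
      then show "\<omega> i \<bullet> \<beta> \<ge> 0" unfolding w[OF i] using pos[OF i] by simp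
    qed
    then show ?thesis using co_sign_iff nz[OF b] by blast
  next
    assume "\<forall>i\<in>{1..r}. c i \<le> 0"
    then have "\<forall>i\<in>{1..r}. \<omega> i \<bullet> \<beta> \<le> 0"
    proof (intro ballI)
      fix i assume i: "i \<in> {1..r}" and h: "\<forall>i\<in>{1..r}. c i \<le> 0"
      then have "c i \<le> 0" by blast
      then show "\<omega> i \<bullet> \<beta> \<le> 0" unfolding w[OF i] using pos[OF i] by (simp add: mult_nonpos_nonneg)
    qed
    then show ?thesis using co_sign_iff nz[OF b] by blast
  qed
qed

lemma pos_iff: "\<beta> \<in> \<Phi> \<Longrightarrow> \<beta> \<in> P \<longleftrightarrow> (\<forall>i\<in>{1..r}. co \<beta> i \<ge> 0)"
proof
  assume b: "\<beta> \<in> \<Phi>" and "\<beta> \<in> P"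
  then obtain c :: "nat \<Rightarrow> real" where c0: "\<forall>i\<in>{1..r}. c i \<ge> 0" and c: "\<beta> = (\<Sum>i=1..r. c i *\<^sub>R \<alpha> i)"
    by (auto simp: pos_roots_def)
  have "\<omega> i \<bullet> \<beta> \<ge> 0" if i: "i \<in> {1..r}" for i
  proof -
    have "c i \<ge> 0" using c0 i by blast
    moreover have "(\<alpha> i \<bullet> \<alpha> i) / 2 \<ge> 0" by simp
    ultimately have "c i * ((\<alpha> i \<bullet> \<alpha> i) / 2) \<ge> 0" by simp
    then show ?thesis using omega_sum_alpha[OF i, of c] c by simp
  qed
  then show "\<forall>i\<in>{1..r}. co \<beta> i \<ge> 0" using co_sign_iff nz[OF b] by blast
next
  assume b: "\<beta> \<in> \<Phi>" and h: "\<forall>i\<in>{1..r}. co \<beta> i \<ge> 0"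
  then have h': "\<forall>i\<in>{1..r}. \<omega> i \<bullet> \<beta> \<ge> 0" using co_sign_iff nz[OF b] by blast
  have "\<beta> = (\<Sum>i=1..r. (\<omega> i \<bullet> \<beta>) *\<^sub>R coroot (\<alpha> i))" by (rule expand)
  also have "\<dots> = (\<Sum>i=1..r. ((\<omega> i \<bullet> \<beta>) * (2 / (\<alpha> i \<bullet> \<alpha> i))) *\<^sub>R \<alpha> i)"
  proof (rule sum.cong)
    fix i assume i: "i \<in> {1..r}"
    show "(\<omega> i \<bullet> \<beta>) *\<^sub>R coroot (\<alpha> i) = ((\<omega> i \<bullet> \<beta>) * (2 / (\<alpha> i \<bullet> \<alpha> i))) *\<^sub>R \<alpha> i"
      by (simp add: coroot_def)
  qed simp
  finally have e: "\<beta> = (\<Sum>i=1..r. ((\<omega> i \<bullet> \<beta>) * (2 / (\<alpha> i \<bullet> \<alpha> i))) *\<^sub>R \<alpha> i)" .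
  have nn: "\<forall>i\<in>{1..r}. (\<omega> i \<bullet> \<beta>) * (2 / (\<alpha> i \<bullet> \<alpha> i)) \<ge> 0"
  proof
    fix i assume "i \<in> {1..r}" then have "\<omega> i \<bullet> \<beta> \<ge> 0" using h' by blast
    then show "(\<omega> i \<bullet> \<beta>) * (2 / (\<alpha> i \<bullet> \<alpha> i)) \<ge> 0" by simp
  qed
  show "\<beta> \<in> P" unfolding pos_roots_def
    by (rule CollectI, rule conjI, rule b, rule exI[of _ "\<lambda>i. (\<omega> i \<bullet> \<beta>) * (2 / (\<alpha> i \<bullet> \<alpha> i))"], rule conjI[OF nn e])
qed

lemma pos_or_neg: "\<beta> \<in> \<Phi> \<Longrightarrow> \<beta> \<in> P \<or> - \<beta> \<in> P"
proof -
  assume b: "\<beta> \<in> \<Phi>"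
  from root_sign[OF b] show ?thesis
  proof
    assume "\<forall>i\<in>{1..r}. co \<beta> i \<ge> 0" then show ?thesis using pos_iff[OF b] by blast
  next
    assume "\<forall>i\<in>{1..r}. co \<beta> i \<le> 0"
    then have "\<forall>i\<in>{1..r}. co (- \<beta>) i \<ge> 0" by (simp add: co_neg)
    then show ?thesis using pos_iff[OF neg_root[OF b]] by blast
  qed
qed

lemma not_both: "\<beta> \<in> P \<Longrightarrow> - \<beta> \<notin> P"
proof
  assume b: "\<beta> \<in> P" and nb: "- \<beta> \<in> P"
  have bP: "\<beta> \<in> \<Phi>" using b pos_sub by auto
  have h1: "\<forall>i\<in>{1..r}. co \<beta> i \<ge> 0" using pos_iff[OF bP] b by blast
  have h2: "\<forall>i\<in>{1..r}. co (- \<beta>) i \<ge> 0" using pos_iff[OF neg_root[OF bP]] nb by blast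
  have "\<forall>i\<in>{1..r}. co \<beta> i = 0"
  proof
    fix i assume i: "i \<in> {1..r}"
    show "co \<beta> i = 0" using h1[rule_format, OF i] h2[rule_format, OF i] by (simp add: co_neg)
  qed
  then show False using co_nz nz[OF bP] by auto
qed

lemma pos_par: "\<beta> \<in> P \<Longrightarrow> \<gamma> \<in> P \<Longrightarrow> \<beta> = c *\<^sub>R \<gamma> \<Longrightarrow> \<beta> = \<gamma>"
proof -
  assume b: "\<beta> \<in> P" and g: "\<gamma> \<in> P" and e: "\<beta> = c *\<^sub>R \<gamma>"
  have "c = 1 \<or> c = -1" using reduced[of \<gamma> c] b g e pos_sub by auto
  then show ?thesis using e b g not_both by auto
qed

lemma alpha_pos: "i \<in> {1..r} \<Longrightarrow> \<alpha> i \<in> P"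
  using pos_iff[OF alpha_in] co_alpha by auto

lemma theta_pos: "\<theta> \<in> P" using high by (simp add: highest_coroot_root_def)
lemma theta_in: "\<theta> \<in> \<Phi>" using theta_pos pos_sub by auto

lemma theta_high: "\<beta> \<in> P \<Longrightarrow> i \<in> {1..r} \<Longrightarrow> co \<beta> i \<le> co \<theta> i"
proof -
  assume b: "\<beta> \<in> P" and i: "i \<in> {1..r}"
  obtain c where c0: "\<forall>i\<in>{1..r}. c i \<ge> 0" and c: "coroot \<theta> - coroot \<beta> = (\<Sum>i=1..r. c i *\<^sub>R coroot (\<alpha> i))"
    using high b by (auto simp: highest_coroot_root_def)
  have "\<omega> i \<bullet> (coroot \<theta> - coroot \<beta>) = c i" using c omega_sum_coroot[OF i] by simp
  then have "co \<theta> i - co \<beta> i = c i" by (simp add: co_def pairing_def inner_diff_right)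
  moreover have "c i \<ge> 0" using c0 i by blast
  ultimately show ?thesis by linarith
qed

end


lemma int_le_m1: "(n::real) \<in> \<int> \<Longrightarrow> \<not> n \<ge> 0 \<Longrightarrow> n \<le> -1"
  by (erule Ints_cases) simp

lemma int_ge_2: "(n::real) \<in> \<int> \<Longrightarrow> \<not> n \<le> 1 \<Longrightarrow> n \<ge> 2"
  by (erule Ints_cases) simp

lemma int_01: "(n::real) \<in> \<int> \<Longrightarrow> n \<ge> 0 \<Longrightarrow> n \<le> 1 \<Longrightarrow> n = 0 \<or> n = 1"
  by (erule Ints_cases) auto

lemma coroot_scale: "c \<noteq> 0 \<Longrightarrow> coroot (c *\<^sub>R v) = (1 / c) *\<^sub>R coroot (v::'a::real_inner)"
  by (simp add: coroot_def field_simps)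

lemma pairing_saff0: "a \<noteq> 0 \<Longrightarrow> pairing (saff a 0 x) b = pairing x (saff a 0 b)"
  using iso_pairing[OF iso_saff0, of a x "saff a 0 b"] by (simp add: saff_invol)

context RS begin

lemma sum_single:
  assumes i: "i \<in> {1..r}" and z: "\<forall>j\<in>{1..r}. j \<noteq> i \<longrightarrow> f j = 0"
  shows "(\<Sum>j=1..r. f j *\<^sub>R coroot (\<alpha> j)) = f i *\<^sub>R coroot (\<alpha> i)"
proof -
  have "(\<Sum>j=1..r. f j *\<^sub>R coroot (\<alpha> j)) = (\<Sum>j=1..r. if j = i then f i *\<^sub>R coroot (\<alpha> i) else 0)"
  proof (rule sum.cong)
    fix j assume "j \<in> {1..r}" then show "f j *\<^sub>R coroot (\<alpha> j) = (if j = i then f i *\<^sub>R coroot (\<alpha> i) else 0)"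
      using z by auto
  qed simp
  also have "\<dots> = f i *\<^sub>R coroot (\<alpha> i)" using i by simp
  finally show ?thesis .
qed

lemma co_saff0:
  assumes g: "\<gamma> \<noteq> 0" and j: "j \<in> {1..r}"
  shows "co (saff \<gamma> 0 \<beta>) j = co \<beta> j - pairing \<gamma> \<beta> * co \<gamma> j"
proof -
  have "coroot (saff \<gamma> 0 \<beta>) = saff \<gamma> 0 (coroot \<beta>)" by (rule iso_coroot[OF iso_saff0[OF g]])
  also have "\<dots> = coroot \<beta> - pairing (coroot \<beta>) \<gamma> *\<^sub>R \<gamma>" by (simp add: saff_apply)
  finally have e: "coroot (saff \<gamma> 0 \<beta>) = coroot \<beta> - pairing (coroot \<beta>) \<gamma> *\<^sub>R \<gamma>" .
  have "co (saff \<gamma> 0 \<beta>) j = co \<beta> j - pairing (coroot \<beta>) \<gamma> * (\<omega> j \<bullet> \<gamma>)"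
    by (simp add: co_def pairing_def[of "\<omega> j"] e inner_diff_right)
  also have "pairing (coroot \<beta>) \<gamma> * (\<omega> j \<bullet> \<gamma>) = pairing \<gamma> \<beta> * co \<gamma> j"
    using g by (cases "\<beta> = 0") (simp_all add: co_dot pairing_alt coroot_def inner_commute)
  finally show ?thesis .
qed

lemma sbar_pos:
  assumes i: "i \<in> {1..r}" and b: "\<beta> \<in> P" and ne: "\<beta> \<noteq> \<alpha> i"
  shows "saff (\<alpha> i) 0 \<beta> \<in> P"
proof -
  have bP: "\<beta> \<in> \<Phi>" using b pos_sub by auto
  have nn: "\<forall>j\<in>{1..r}. co \<beta> j \<ge> 0" using pos_iff[OF bP] b by blast
  have "\<exists>j\<in>{1..r}. j \<noteq> i \<and> co \<beta> j > 0"
  proof (rule ccontr)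
    assume "\<not> ?thesis"
    then have z: "\<forall>j\<in>{1..r}. j \<noteq> i \<longrightarrow> co \<beta> j = 0" using nn by force
    have cr: "coroot \<beta> = co \<beta> i *\<^sub>R coroot (\<alpha> i)"
      using coroot_expand[of \<beta>] sum_single[OF i z] by simp
    have c0: "co \<beta> i \<noteq> 0" using cr nz[OF bP] coroot_eq_0 by force
    have "\<beta> = coroot (co \<beta> i *\<^sub>R coroot (\<alpha> i))" using cr coroot_coroot nz[OF bP] by metis
    also have "\<dots> = (1 / co \<beta> i) *\<^sub>R \<alpha> i"
      using coroot_scale[OF c0] coroot_coroot alpha_nz[OF i] by metis
    finally have "\<beta> = \<alpha> i" using pos_par b alpha_pos[OF i] by blast
    then show False using ne by simp
  qed
  then obtain j where j: "j \<in> {1..r}" "j \<noteq> i" "co \<beta> j > 0" by blast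
  have "co (saff (\<alpha> i) 0 \<beta>) j = co \<beta> j"
    using co_saff0[OF alpha_nz[OF i] j(1)] co_alpha[OF j(1) i] j(2) by simp
  then have pj: "co (saff (\<alpha> i) 0 \<beta>) j > 0" using j by simp
  have sP: "saff (\<alpha> i) 0 \<beta> \<in> \<Phi>" using refl_closed alpha_in[OF i] bP by blast
  have "\<forall>k\<in>{1..r}. co (saff (\<alpha> i) 0 \<beta>) k \<ge> 0"
    using root_sign[OF sP] pj j(1) by force
  then show ?thesis using pos_iff[OF sP] by blast
qed

lemma theta_nz: "\<theta> \<noteq> 0" using nz theta_in by blast

lemma theta_pair_int: "\<beta> \<in> \<Phi> \<Longrightarrow> pairing \<theta> \<beta> \<in> \<int>" using integ theta_in by blast

lemma theta_pair_bounds: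
  assumes b: "\<beta> \<in> P" and ne: "\<beta> \<noteq> \<theta>"
  shows "pairing \<theta> \<beta> = 0 \<or> pairing \<theta> \<beta> = 1"
proof -
  have bP: "\<beta> \<in> \<Phi>" using b pos_sub by auto
  define n where "n = pairing \<theta> \<beta>"
  have nI: "n \<in> \<int>" using theta_pair_int[OF bP] n_def by simp
  define \<delta> where "\<delta> = saff \<theta> 0 \<beta>"
  have dP: "\<delta> \<in> \<Phi>" using refl_closed[OF theta_in bP] \<delta>_def by simp
  have cd: "co \<delta> j = co \<beta> j - n * co \<theta> j" if "j \<in> {1..r}" for j
    using co_saff0[OF theta_nz that] \<delta>_def n_def by simp
  have cb: "co \<beta> j \<ge> 0" if "j \<in> {1..r}" for j using pos_iff[OF bP] b that by blast
  have ct: "co \<theta> j \<ge> 0" if "j \<in> {1..r}" for j using pos_iff[OF theta_in] theta_pos that by blast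
  have hb: "co \<beta> j \<le> co \<theta> j" if "j \<in> {1..r}" for j using theta_high[OF b that] .
  have n_ge: "n \<ge> 0"
  proof (rule ccontr)
    assume "\<not> n \<ge> 0"
    then have "n \<le> -1" using nI int_le_m1 by blast
    have dpos: "\<forall>j\<in>{1..r}. co \<delta> j \<ge> 0"
    proof
      fix j assume j: "j \<in> {1..r}"
      have "n * co \<theta> j \<le> 0" using \<open>n \<le> -1\<close> ct[OF j] by (simp add: mult_nonpos_nonneg)
      then show "co \<delta> j \<ge> 0" using cd[OF j] cb[OF j] by linarith
    qed
    then have dpos': "\<delta> \<in> P" using pos_iff[OF dP] by blast
    have "\<forall>j\<in>{1..r}. co \<beta> j = 0"
    proof
      fix j assume j: "j \<in> {1..r}"
      have "co \<delta> j \<le> co \<theta> j" using theta_high[OF dpos' j] .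
      moreover have "n * co \<theta> j \<le> - co \<theta> j" using \<open>n \<le> -1\<close> ct[OF j]
        using mult_right_mono[of n "-1" "co \<theta> j"] by simp
      ultimately show "co \<beta> j = 0" using cd[OF j] cb[OF j] ct[OF j] by linarith
    qed
    then show False using co_nz nz[OF bP] by blast
  qed
  have n_le: "n \<le> 1"
  proof (rule ccontr)
    assume "\<not> n \<le> 1"
    then have n2: "n \<ge> 2" using nI int_ge_2 by blast
    have mdP: "- \<delta> \<in> \<Phi>" using neg_root[OF dP] .
    have cmd: "co (- \<delta>) j = n * co \<theta> j - co \<beta> j" if "j \<in> {1..r}" for j
      using cd[OF that] by (simp add: co_neg)
    have "\<forall>j\<in>{1..r}. co (- \<delta>) j \<ge> 0"
    proof
      fix j assume j: "j \<in> {1..r}"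
      have "n * co \<theta> j \<ge> 2 * co \<theta> j" using n2 ct[OF j] mult_right_mono[of 2 n "co \<theta> j"] by simp
      then show "co (- \<delta>) j \<ge> 0" using cmd[OF j] hb[OF j] ct[OF j] by linarith
    qed
    then have mdpos: "- \<delta> \<in> P" using pos_iff[OF mdP] by blast
    have "\<forall>j\<in>{1..r}. co \<beta> j = co \<theta> j"
    proof
      fix j assume j: "j \<in> {1..r}"
      have "co (- \<delta>) j \<le> co \<theta> j" using theta_high[OF mdpos j] .
      then have "co \<beta> j \<ge> (n - 1) * co \<theta> j" using cmd[OF j] by (simp add: algebra_simps)
      moreover have "(n - 1) * co \<theta> j \<ge> 1 * co \<theta> j" using n2 ct[OF j] mult_right_mono[of 1 "n - 1" "co \<theta> j"] by simp
      ultimately show "co \<beta> j = co \<theta> j" using hb[OF j] by linarith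
    qed
    then have "\<beta> = \<theta>" using co_eq_imp nz[OF bP] theta_nz by blast
    then show False using ne by simp
  qed
  from int_01[OF nI n_ge n_le] show ?thesis unfolding n_def .
qed

end


lemma int_side: "of_int a < (v::real) \<Longrightarrow> v < of_int a + 1 \<Longrightarrow> (v > of_int m \<longleftrightarrow> m \<le> a)"
proof -
  assume 1: "of_int a < v" and 2: "v < of_int a + 1"
  show ?thesis
  proof
    assume "v > of_int m" then have "of_int m < (of_int (a + 1) :: real)" using 2 by simp
    then show "m \<le> a" by linarith
  next
    assume "m \<le> a" then have "(of_int m :: real) \<le> of_int a" by simp
    then show "v > of_int m" using 1 by linarith
  qed
qed

lemma int_noteq: "of_int a < (v::real) \<Longrightarrow> v < of_int a + 1 \<Longrightarrow> v \<noteq> of_int m"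
  using int_side[of a v m] int_side[of a v "m - 1"] by auto

context RS begin

definition gam :: "nat \<Rightarrow> 'a" where "gam i = (if i = 0 then \<theta> else \<alpha> i)"
definition kk :: "nat \<Rightarrow> int" where "kk i = (if i = 0 then 1 else 0)"

lemma sgen_wall: "i \<in> {0..r} \<Longrightarrow> sgen \<alpha> \<theta> i = saff (gam i) (of_int (kk i))"
  using saff_neg[of \<theta> 1] by (auto simp: sgen_def gam_def kk_def)

lemma gam_pos: "i \<in> {0..r} \<Longrightarrow> gam i \<in> P"
  by (cases "i = 0") (auto simp: gam_def theta_pos alpha_pos)

lemma gam_nz: "i \<in> {0..r} \<Longrightarrow> gam i \<noteq> 0"
  using gam_pos pos_sub nz by blast

lemma A_pair: "x \<in> A \<Longrightarrow> \<beta> \<in> P \<Longrightarrow> 0 < pairing x \<beta> \<and> pairing x \<beta> < 1"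
  by (simp add: fund_alcove_def)

lemma pairing_expand_co: "pairing x \<beta> = (\<Sum>j=1..r. co \<beta> j * pairing x (\<alpha> j))"
proof -
  have "pairing x \<beta> = x \<bullet> (\<Sum>j=1..r. co \<beta> j *\<^sub>R coroot (\<alpha> j))"
    unfolding pairing_def by (subst coroot_expand) (rule refl)
  also have "\<dots> = (\<Sum>j=1..r. co \<beta> j * pairing x (\<alpha> j))"
    by (simp add: inner_sum_right pairing_def)
  finally show ?thesis .
qed

lemma G1:
  assumes x: "x \<in> A" and i: "i \<in> {0..r}" and b: "\<beta> \<in> P" and ne: "\<beta> \<noteq> gam i"
  shows "0 < pairing (sgen \<alpha> \<theta> i x) \<beta> \<and> pairing (sgen \<alpha> \<theta> i x) \<beta> < 1"
proof (cases "i = 0")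
  case False
  then have i1: "i \<in> {1..r}" using i by auto
  have "sgen \<alpha> \<theta> i x = saff (\<alpha> i) 0 x" using False by (simp add: sgen_def)
  then have "pairing (sgen \<alpha> \<theta> i x) \<beta> = pairing x (saff (\<alpha> i) 0 \<beta>)"
    using pairing_saff0[OF alpha_nz[OF i1]] by simp
  moreover have "saff (\<alpha> i) 0 \<beta> \<in> P" using sbar_pos[OF i1 b] ne False by (simp add: gam_def)
  ultimately show ?thesis using A_pair[OF x] by simp
next
  case True
  then have s: "sgen \<alpha> \<theta> i x = saff \<theta> 1 x" using sgen_wall[OF i] by (simp add: gam_def kk_def)
  have bt: "\<beta> \<noteq> \<theta>" using ne True by (simp add: gam_def)
  have e: "pairing (sgen \<alpha> \<theta> i x) \<beta> = pairing x \<beta> - (pairing x \<theta> - 1) * pairing \<theta> \<beta>"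
    by (simp add: s saff_apply pairing_diff pairing_scale)
  have xb: "0 < pairing x \<beta> \<and> pairing x \<beta> < 1" using A_pair[OF x b] .
  have xt: "0 < pairing x \<theta> \<and> pairing x \<theta> < 1" using A_pair[OF x theta_pos] .
  from theta_pair_bounds[OF b bt] show ?thesis
  proof
    assume "pairing \<theta> \<beta> = 0" then show ?thesis using e xb by simp
  next
    assume n1: "pairing \<theta> \<beta> = 1"
    have "pairing x \<theta> - pairing x \<beta> = (\<Sum>j=1..r. (co \<theta> j - co \<beta> j) * pairing x (\<alpha> j))"
      by (simp add: pairing_expand_co[of x \<theta>] pairing_expand_co[of x \<beta>] sum_subtractf[symmetric] left_diff_distrib)
    moreover have "(\<Sum>j=1..r. (co \<theta> j - co \<beta> j) * pairing x (\<alpha> j)) > 0"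
    proof -
      have bP: "\<beta> \<in> \<Phi>" using b pos_sub by auto
      obtain j where j: "j \<in> {1..r}" "co \<theta> j \<noteq> co \<beta> j"
        using co_eq_imp[OF nz[OF bP] theta_nz] bt by metis
      have "co \<theta> j - co \<beta> j > 0" using theta_high[OF b j(1)] j(2) by simp
      moreover have "pairing x (\<alpha> j) > 0" using A_pair[OF x alpha_pos[OF j(1)]] by simp
      ultimately have "(co \<theta> j - co \<beta> j) * pairing x (\<alpha> j) > 0" by simp
      moreover have "\<forall>k\<in>{1..r}. (co \<theta> k - co \<beta> k) * pairing x (\<alpha> k) \<ge> 0"
      proof
        fix k assume k: "k \<in> {1..r}"
        have "co \<theta> k - co \<beta> k \<ge> 0" using theta_high[OF b k] by simp
        moreover have "pairing x (\<alpha> k) > 0" using A_pair[OF x alpha_pos[OF k]] by simp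
        ultimately show "(co \<theta> k - co \<beta> k) * pairing x (\<alpha> k) \<ge> 0" by simp
      qed
      ultimately show ?thesis using j(1) by (intro sum_pos2[of "{1..r}" j]) auto
    qed
    ultimately have "pairing x \<theta> - pairing x \<beta> > 0" by simp
    then show ?thesis using e n1 xb xt by simp
  qed
qed

lemma G1self: "i \<in> {0..r} \<Longrightarrow> pairing (sgen \<alpha> \<theta> i x) (gam i) = 2 * of_int (kk i) - pairing x (gam i)"
  using pairing_saff_self[OF gam_nz] sgen_wall by simp

lemma bnd_pos:
  assumes x: "x \<in> A" and i: "i \<in> {0..r}" and g: "\<gamma> \<in> P"
  shows "0 < pairing x \<gamma> \<and> pairing x \<gamma> < 1"
    and "\<exists>a::int. of_int a < pairing (sgen \<alpha> \<theta> i x) \<gamma> \<and> pairing (sgen \<alpha> \<theta> i x) \<gamma> < of_int a + 1 \<and>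
           (a = 0 \<or> (\<gamma> = gam i \<and> a = 2 * kk i - 1))"
proof -
  show "0 < pairing x \<gamma> \<and> pairing x \<gamma> < 1" using A_pair[OF x g] .
  show "\<exists>a::int. of_int a < pairing (sgen \<alpha> \<theta> i x) \<gamma> \<and> pairing (sgen \<alpha> \<theta> i x) \<gamma> < of_int a + 1 \<and>
           (a = 0 \<or> (\<gamma> = gam i \<and> a = 2 * kk i - 1))"
  proof (cases "\<gamma> = gam i")
    case True
    have "pairing (sgen \<alpha> \<theta> i x) \<gamma> = 2 * of_int (kk i) - pairing x \<gamma>" using G1self[OF i] True by simp
    then show ?thesis using A_pair[OF x g] True
      by (intro exI[of _ "2 * kk i - 1"]) simp
  next
    case False
    then show ?thesis using G1[OF x i g False] by (intro exI[of _ 0]) simp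
  qed
qed

lemma side_pos:
  assumes x: "x \<in> A" and i: "i \<in> {0..r}" and g: "\<gamma> \<in> P"
  shows "((pairing (sgen \<alpha> \<theta> i x) \<gamma> > of_int m) \<noteq> (pairing x \<gamma> > of_int m)) \<longleftrightarrow> (\<gamma> = gam i \<and> m = kk i)"
proof -
  have 1: "pairing x \<gamma> > of_int m \<longleftrightarrow> m \<le> 0" using int_side[of 0 "pairing x \<gamma>" m] bnd_pos(1)[OF x i g] by simp
  obtain a where a: "of_int a < pairing (sgen \<alpha> \<theta> i x) \<gamma>" "pairing (sgen \<alpha> \<theta> i x) \<gamma> < of_int a + 1"
    "a = 0 \<or> (\<gamma> = gam i \<and> a = 2 * kk i - 1)" using bnd_pos(2)[OF x i g] by blast
  have 2: "pairing (sgen \<alpha> \<theta> i x) \<gamma> > of_int m \<longleftrightarrow> m \<le> a" using int_side[OF a(1,2)] .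
  show ?thesis
  proof (cases "\<gamma> = gam i")
    case True
    then have "pairing (sgen \<alpha> \<theta> i x) \<gamma> = 2 * of_int (kk i) - pairing x \<gamma>" using G1self[OF i] by simp
    then have "of_int (2 * kk i - 1) < pairing (sgen \<alpha> \<theta> i x) \<gamma>" "pairing (sgen \<alpha> \<theta> i x) \<gamma> < of_int (2 * kk i - 1) + 1"
      using bnd_pos(1)[OF x i g] by simp_all
    then have "pairing (sgen \<alpha> \<theta> i x) \<gamma> > of_int m \<longleftrightarrow> m \<le> 2 * kk i - 1" using int_side by blast
    then show ?thesis using 1 True by (auto simp: kk_def)
  next
    case False
    then have "a = 0" using a(3) by simp
    then show ?thesis using 1 2 False by simp
  qed
qed

lemma bnd_gen:
  assumes x: "x \<in> A" and i: "i \<in> {0..r}" and g: "\<gamma> \<in> \<Phi>"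
  shows "pairing x \<gamma> \<noteq> of_int m" and "pairing (sgen \<alpha> \<theta> i x) \<gamma> \<noteq> of_int m"
proof -
  have both: "pairing x \<delta> \<noteq> of_int n \<and> pairing (sgen \<alpha> \<theta> i x) \<delta> \<noteq> of_int n" if d: "\<delta> \<in> P" for \<delta> n
  proof -
    obtain a where a: "of_int a < pairing (sgen \<alpha> \<theta> i x) \<delta>" "pairing (sgen \<alpha> \<theta> i x) \<delta> < of_int a + 1"
      using bnd_pos(2)[OF x i d] by blast
    show ?thesis using int_noteq[OF a] int_noteq[of 0 "pairing x \<delta>" n] bnd_pos(1)[OF x i d] by simp
  qed
  from pos_or_neg[OF g] have "pairing x \<gamma> \<noteq> of_int m \<and> pairing (sgen \<alpha> \<theta> i x) \<gamma> \<noteq> of_int m"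
  proof
    assume "\<gamma> \<in> P" then show ?thesis using both by blast
  next
    assume "- \<gamma> \<in> P" then show ?thesis using both[of "-\<gamma>" "-m"] by (simp add: pairing_uminus2)
  qed
  then show "pairing x \<gamma> \<noteq> of_int m" and "pairing (sgen \<alpha> \<theta> i x) \<gamma> \<noteq> of_int m" by auto
qed

lemma side_flip:
  assumes x: "x \<in> A" and i: "i \<in> {0..r}" and g: "\<gamma> \<in> \<Phi>"
  shows "((pairing (sgen \<alpha> \<theta> i x) \<gamma> > of_int m) \<noteq> (pairing x \<gamma> > of_int m)) \<longleftrightarrow>
         ((\<gamma> = gam i \<and> m = kk i) \<or> (\<gamma> = - gam i \<and> m = - kk i))"
proof -
  from pos_or_neg[OF g] show ?thesis
  proof
    assume gp: "\<gamma> \<in> P"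
    have "\<gamma> \<noteq> - gam i" using not_both[OF gam_pos[OF i]] gp by auto
    then show ?thesis using side_pos[OF x i gp] by auto
  next
    assume gn: "- \<gamma> \<in> P"
    have ng: "\<gamma> \<noteq> gam i" using not_both gam_pos[OF i] gn by auto
    have e1: "(pairing y \<gamma> > of_int m) \<longleftrightarrow> \<not> (pairing y (- \<gamma>) > of_int (- m))"
      if "pairing y (-\<gamma>) \<noteq> of_int (- m)" for y
      using that by (auto simp: pairing_uminus2)
    have n1: "pairing x (-\<gamma>) \<noteq> of_int (- m)" using bnd_gen(1)[OF x i neg_root[OF g]] .
    have n2: "pairing (sgen \<alpha> \<theta> i x) (-\<gamma>) \<noteq> of_int (- m)" using bnd_gen(2)[OF x i neg_root[OF g]] .
    have "((pairing (sgen \<alpha> \<theta> i x) \<gamma> > of_int m) \<noteq> (pairing x \<gamma> > of_int m)) \<longleftrightarrow>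
          ((pairing (sgen \<alpha> \<theta> i x) (-\<gamma>) > of_int (-m)) \<noteq> (pairing x (-\<gamma>) > of_int (-m)))"
      using e1[OF n1] e1[OF n2] by blast
    also have "\<dots> \<longleftrightarrow> (- \<gamma> = gam i \<and> - m = kk i)" using side_pos[OF x i gn] .
    finally show ?thesis using ng by (auto simp: minus_equation_iff[of \<gamma>])
  qed
qed

end


lemma wprod_Nil[simp]: "wprod \<alpha> \<theta> [] = id" by (simp add: wprod_def)
lemma wprod_Cons: "wprod \<alpha> \<theta> (i # w) = sgen \<alpha> \<theta> i \<circ> wprod \<alpha> \<theta> w" by (simp add: wprod_def)
lemma wprod_append: "wprod \<alpha> \<theta> (u @ v) = wprod \<alpha> \<theta> u \<circ> wprod \<alpha> \<theta> v"
  by (induction u) (simp_all add: wprod_Cons comp_assoc)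
lemma wprod_snoc: "wprod \<alpha> \<theta> (w @ [i]) = wprod \<alpha> \<theta> w \<circ> sgen \<alpha> \<theta> i"
  by (simp add: wprod_append wprod_Cons)
lemma wbarprod_Nil[simp]: "wbarprod \<alpha> \<theta> [] = id" by (simp add: wbarprod_def)
lemma wbarprod_Cons: "wbarprod \<alpha> \<theta> (i # w) = sbar \<alpha> \<theta> i \<circ> wbarprod \<alpha> \<theta> w" by (simp add: wbarprod_def)

lemma iso_ident: "iso (\<lambda>x. x)" using iso_id by (simp add: id_def)

lemma Ints_obtain: "(v::real) \<in> \<int> \<Longrightarrow> (\<And>m::int. v = of_int m \<Longrightarrow> thesis) \<Longrightarrow> thesis"
  by (erule Ints_cases) blast

context RS begin

definition goodLb :: "('a \<Rightarrow> 'a) \<Rightarrow> 'a \<Rightarrow> bool" where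
  "goodLb L b \<longleftrightarrow> iso L \<and> (\<forall>\<beta>\<in>\<Phi>. L \<beta> \<in> \<Phi>) \<and> (\<forall>\<beta>\<in>\<Phi>. pairing b \<beta> \<in> \<int>)"

definition good :: "('a \<Rightarrow> 'a) \<Rightarrow> bool" where
  "good g \<longleftrightarrow> (\<exists>L b. goodLb L b \<and> (\<forall>x. g x = L x + b))"

lemma goodLb_img: "goodLb L b \<Longrightarrow> L ` \<Phi> = \<Phi>"
proof -
  assume g: "goodLb L b"
  have sub: "L ` \<Phi> \<subseteq> \<Phi>" using g by (auto simp: goodLb_def)
  have "inj_on L \<Phi>" using iso_inj g by (auto simp: goodLb_def inj_on_def inj_def)
  then have "card (L ` \<Phi>) = card \<Phi>" by (rule card_image)
  then show ?thesis using card_subset_eq[OF finPhi sub] by simp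
qed

lemma goodLb_surj: "goodLb L b \<Longrightarrow> \<beta> \<in> \<Phi> \<Longrightarrow> \<exists>\<gamma>\<in>\<Phi>. L \<gamma> = \<beta>"
proof -
  assume "goodLb L b" "\<beta> \<in> \<Phi>"
  then have "\<beta> \<in> L ` \<Phi>" using goodLb_img by blast
  then show ?thesis by blast
qed

lemma goodLb_comp:
  assumes 1: "goodLb L1 b1" and 2: "goodLb L2 b2"
  shows "goodLb (L1 \<circ> L2) (L1 b2 + b1)"
  unfolding goodLb_def
proof (intro conjI ballI)
  show "iso (L1 \<circ> L2)" using 1 2 by (simp add: goodLb_def iso_comp)
next
  fix \<beta> assume b: "\<beta> \<in> \<Phi>" then show "(L1 \<circ> L2) \<beta> \<in> \<Phi>" using 1 2 by (simp add: goodLb_def)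
next
  fix \<beta> assume b: "\<beta> \<in> \<Phi>"
  obtain \<gamma> where g: "\<gamma> \<in> \<Phi>" "L1 \<gamma> = \<beta>" using goodLb_surj[OF 1 b] by blast
  have "pairing (L1 b2) \<beta> = pairing b2 \<gamma>" using g 1 by (auto simp: goodLb_def iso_pairing)
  then show "pairing (L1 b2 + b1) \<beta> \<in> \<int>" using 1 2 b g by (simp add: pairing_add goodLb_def)
qed

lemma good_comp: "good f \<Longrightarrow> good g \<Longrightarrow> good (f \<circ> g)"
proof -
  assume "good f" "good g"
  then obtain L1 b1 L2 b2 where 1: "goodLb L1 b1" "\<forall>x. f x = L1 x + b1"
    and 2: "goodLb L2 b2" "\<forall>x. g x = L2 x + b2" by (auto simp: good_def)
  have "\<forall>x. (f \<circ> g) x = (L1 \<circ> L2) x + (L1 b2 + b1)"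
    using 1 2 by (auto simp: goodLb_def iso_def linear_add)
  then show "good (f \<circ> g)" using goodLb_comp[OF 1(1) 2(1)] unfolding good_def by blast
qed

lemma root_idx_in: "i \<in> {0..r} \<Longrightarrow> root_idx \<alpha> \<theta> i \<in> \<Phi>"
  by (auto simp: root_idx_def neg_root theta_in alpha_in)

definition cc :: "nat \<Rightarrow> int" where "cc i = (if i = 0 then -1 else 0)"

lemma sgen_ridx: "sgen \<alpha> \<theta> i = saff (root_idx \<alpha> \<theta> i) (of_int (cc i))"
  by (simp add: sgen_def root_idx_def cc_def)

lemma sbar_ridx: "sbar \<alpha> \<theta> i = saff (root_idx \<alpha> \<theta> i) 0"
  by (simp add: sbar_def)

lemma goodLb_gen: "i \<in> {0..r} \<Longrightarrow> goodLb (sbar \<alpha> \<theta> i) (sgen \<alpha> \<theta> i 0)"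
proof -
  assume i: "i \<in> {0..r}"
  let ?a = "root_idx \<alpha> \<theta> i"
  have a: "?a \<in> \<Phi>" using root_idx_in[OF i] .
  have s0: "sgen \<alpha> \<theta> i 0 = of_int (cc i) *\<^sub>R ?a" by (simp add: sgen_ridx saff_apply)
  show ?thesis unfolding goodLb_def sbar_ridx
  proof (intro conjI ballI)
    show "iso (saff ?a 0)" using iso_saff0 nz[OF a] .
  next
    fix \<beta> assume "\<beta> \<in> \<Phi>" then show "saff ?a 0 \<beta> \<in> \<Phi>" using refl_closed a by blast
  next
    fix \<beta> assume b: "\<beta> \<in> \<Phi>"
    have "pairing (sgen \<alpha> \<theta> i 0) \<beta> = of_int (cc i) * pairing ?a \<beta>" by (simp add: s0 pairing_scale)
    then show "pairing (sgen \<alpha> \<theta> i 0) \<beta> \<in> \<int>" using integ[OF b a] by simp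
  qed
qed

lemma sgen_split: "sgen \<alpha> \<theta> i x = sbar \<alpha> \<theta> i x + sgen \<alpha> \<theta> i 0"
  by (simp add: sgen_ridx sbar_ridx saff_apply algebra_simps)

lemma wprod_affine:
  "set w \<subseteq> {0..r} \<Longrightarrow> goodLb (wbarprod \<alpha> \<theta> w) (wprod \<alpha> \<theta> w 0) \<and>
     (\<forall>x. wprod \<alpha> \<theta> w x = wbarprod \<alpha> \<theta> w x + wprod \<alpha> \<theta> w 0)"
proof (induction w)
  case Nil
  have g0: "goodLb id 0" unfolding goodLb_def using iso_id by simp
  show ?case
  proof (rule conjI)
    show "goodLb (wbarprod \<alpha> \<theta> []) (wprod \<alpha> \<theta> [] 0)" using g0 by (simp only: wbarprod_Nil wprod_Nil id_apply)
  next
    show "\<forall>x. wprod \<alpha> \<theta> [] x = wbarprod \<alpha> \<theta> [] x + wprod \<alpha> \<theta> [] 0" by simp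
  qed
next
  case (Cons i w)
  then have i: "i \<in> {0..r}" and w: "set w \<subseteq> {0..r}" by auto
  note IH = Cons.IH[OF w]
  have l: "linear (sbar \<alpha> \<theta> i)" by (simp add: sbar_ridx linear_saff0)
  have "wprod \<alpha> \<theta> (i # w) x = wbarprod \<alpha> \<theta> (i # w) x + wprod \<alpha> \<theta> (i # w) 0" for x
  proof -
    have "wprod \<alpha> \<theta> (i # w) x = sgen \<alpha> \<theta> i (wbarprod \<alpha> \<theta> w x + wprod \<alpha> \<theta> w 0)"
      using conjunct2[OF IH, rule_format, of x] by (simp add: wprod_Cons)
    also have "\<dots> = sbar \<alpha> \<theta> i (wbarprod \<alpha> \<theta> w x) + (sbar \<alpha> \<theta> i (wprod \<alpha> \<theta> w 0) + sgen \<alpha> \<theta> i 0)"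
      unfolding sgen_split[of i "wbarprod \<alpha> \<theta> w x + wprod \<alpha> \<theta> w 0"] using l by (simp add: linear_add)
    also have "sbar \<alpha> \<theta> i (wprod \<alpha> \<theta> w 0) + sgen \<alpha> \<theta> i 0 = wprod \<alpha> \<theta> (i # w) 0"
      using sgen_split[of i "wprod \<alpha> \<theta> w 0"] by (simp add: wprod_Cons)
    finally show ?thesis by (simp add: wbarprod_Cons)
  qed
  moreover have "goodLb (wbarprod \<alpha> \<theta> (i # w)) (wprod \<alpha> \<theta> (i # w) 0)"
  proof -
    have "goodLb (sbar \<alpha> \<theta> i \<circ> wbarprod \<alpha> \<theta> w) (sbar \<alpha> \<theta> i (wprod \<alpha> \<theta> w 0) + sgen \<alpha> \<theta> i 0)"
      using goodLb_comp[OF goodLb_gen[OF i] conjunct1[OF IH]] .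
    moreover have "sbar \<alpha> \<theta> i (wprod \<alpha> \<theta> w 0) + sgen \<alpha> \<theta> i 0 = wprod \<alpha> \<theta> (i # w) 0"
      using sgen_split[of i "wprod \<alpha> \<theta> w 0"] by (simp add: wprod_Cons)
    ultimately show ?thesis by (simp add: wbarprod_Cons)
  qed
  ultimately show ?case by blast
qed

lemma good_wprod: "set w \<subseteq> {0..r} \<Longrightarrow> good (wprod \<alpha> \<theta> w)"
  using wprod_affine unfolding good_def by blast

lemma good_trans: "(\<forall>\<beta>\<in>\<Phi>. pairing b \<beta> \<in> \<int>) \<Longrightarrow> good (\<lambda>x. x + b)"
proof -
  assume h: "\<forall>\<beta>\<in>\<Phi>. pairing b \<beta> \<in> \<int>"
  have "goodLb id b" unfolding goodLb_def using h iso_id by simp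
  then show ?thesis unfolding good_def by force
qed

lemma sgen_invol: "i \<in> {0..r} \<Longrightarrow> sgen \<alpha> \<theta> i (sgen \<alpha> \<theta> i x) = x"
  using sgen_wall[of i] saff_invol[OF gam_nz[of i]] by simp

lemma wprod_rev_inv: "set w \<subseteq> {0..r} \<Longrightarrow> wprod \<alpha> \<theta> (rev w) (wprod \<alpha> \<theta> w x) = x"
proof (induction w arbitrary: x)
  case Nil then show ?case by simp
next
  case (Cons i w)
  then show ?case by (simp add: wprod_append wprod_Cons sgen_invol)
qed

lemma wprod_inv_rev: "set w \<subseteq> {0..r} \<Longrightarrow> wprod \<alpha> \<theta> w (wprod \<alpha> \<theta> (rev w) x) = x"
  using wprod_rev_inv[of "rev w" x] by simp

lemma good_pre:
  assumes g: "good g" and b: "\<beta> \<in> \<Phi>"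
  shows "\<exists>\<gamma>\<in>\<Phi>. \<exists>m::int. \<forall>x. pairing (g x) \<beta> = pairing x \<gamma> + of_int m"
proof -
  obtain L c where L: "goodLb L c" "\<forall>x. g x = L x + c" using g by (auto simp: good_def)
  obtain \<gamma> where ga: "\<gamma> \<in> \<Phi>" "L \<gamma> = \<beta>" using goodLb_surj[OF L(1) b] by blast
  obtain m :: int where m: "pairing c \<beta> = of_int m" using L(1) b by (auto simp: goodLb_def elim!: Ints_obtain)
  have "\<forall>x. pairing (g x) \<beta> = pairing x \<gamma> + of_int m"
    using L ga m by (auto simp: pairing_add iso_pairing goodLb_def)
  then show ?thesis using ga by blast
qed

lemma side_A: "x \<in> A \<Longrightarrow> \<gamma> \<in> \<Phi> \<Longrightarrow> (pairing x \<gamma> > of_int n) \<longleftrightarrow> (if \<gamma> \<in> P then n \<le> 0 else n \<le> -1)"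
proof -
  assume x: "x \<in> A" and g: "\<gamma> \<in> \<Phi>"
  show ?thesis
  proof (cases "\<gamma> \<in> P")
    case True
    then show ?thesis using int_side[of 0 "pairing x \<gamma>" n] A_pair[OF x True] by simp
  next
    case False
    then have "- \<gamma> \<in> P" using pos_or_neg[OF g] by blast
    then have "of_int (-1) < pairing x \<gamma> \<and> pairing x \<gamma> < of_int (-1) + 1"
      using A_pair[OF x \<open>- \<gamma> \<in> P\<close>] by (simp add: pairing_uminus2)
    then show ?thesis using int_side[of "-1" "pairing x \<gamma>" n] False by simp
  qed
qed

lemma good_A:
  assumes g: "good g" and x: "x \<in> A" and y: "y \<in> A" and gx: "g x \<in> A"
  shows "g y \<in> A"
  unfolding fund_alcove_def
proof (intro CollectI ballI)
  fix \<beta> assume b: "\<beta> \<in> P"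
  obtain \<gamma> m where ga: "\<gamma> \<in> \<Phi>" "\<forall>x. pairing (g x) \<beta> = pairing x \<gamma> + of_int m"
    using good_pre[OF g] b pos_sub by blast
  have "0 < pairing (g x) \<beta> \<and> pairing (g x) \<beta> < 1" using A_pair[OF gx b] .
  then have 1: "pairing x \<gamma> > of_int (- m) \<and> \<not> pairing x \<gamma> > of_int (1 - m)" using ga by auto
  have 2: "pairing y \<gamma> > of_int (- m) \<longleftrightarrow> pairing x \<gamma> > of_int (- m)"
    unfolding side_A[OF x ga(1)] side_A[OF y ga(1)] ..
  have 3: "pairing y \<gamma> > of_int (1 - m) \<longleftrightarrow> pairing x \<gamma> > of_int (1 - m)"
    unfolding side_A[OF x ga(1)] side_A[OF y ga(1)] ..
  have 4: "pairing y \<gamma> \<noteq> of_int (1 - m)"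
  proof (cases "\<gamma> \<in> P")
    case True then show ?thesis using int_noteq[of 0 "pairing y \<gamma>" "1 - m"] A_pair[OF y True] by simp
  next
    case False then have "- \<gamma> \<in> P" using pos_or_neg[OF ga(1)] by blast
    then have "0 < pairing y (-\<gamma>) \<and> pairing y (-\<gamma>) < 1" using A_pair[OF y] by blast
    then have "pairing y (-\<gamma>) \<noteq> of_int (m - 1)" using int_noteq[of 0 "pairing y (-\<gamma>)" "m - 1"] by simp
    then show ?thesis by (simp add: pairing_uminus2)
  qed
  show "0 < pairing (g y) \<beta> \<and> pairing (g y) \<beta> < 1" using 1 2 3 4 ga(2) by auto
qed

definition sep :: "('a \<Rightarrow> 'a) \<Rightarrow> 'a \<Rightarrow> ('a \<times> int) set" where
  "sep g x = {(\<beta>, k). \<beta> \<in> P \<and> (pairing (g x) \<beta> > of_int k) \<noteq> (k \<le> 0)}"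

lemma sep_empty: "x \<in> A \<Longrightarrow> g x \<in> A \<Longrightarrow> sep g x = {}"
  unfolding sep_def using A_pair int_side[of 0 _] by fastforce

lemma sep_step:
  assumes g: "goodLb L c" "\<forall>y. g y = L y + c" and x: "x \<in> A" and i: "i \<in> {0..r}"
  shows "\<exists>\<beta> k. \<beta> \<in> P \<and> g \<circ> sgen \<alpha> \<theta> i = saff \<beta> (of_int k) \<circ> g \<and>
           (\<forall>h. h \<in> sep (g \<circ> sgen \<alpha> \<theta> i) x \<longleftrightarrow> (h \<in> sep g x) \<noteq> (h = (\<beta>, k)))"
proof -
  have iL: "iso L" using g(1) by (simp add: goodLb_def)
  define \<beta>' where "\<beta>' = L (gam i)"
  have b'P: "\<beta>' \<in> \<Phi>" using g(1) gam_pos[OF i] pos_sub by (auto simp: goodLb_def \<beta>'_def)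
  obtain m0 :: int where m0: "pairing c \<beta>' = of_int m0" using g(1) b'P by (auto simp: goodLb_def elim!: Ints_obtain)
  define k' where "k' = kk i + m0"
  have conj: "g \<circ> sgen \<alpha> \<theta> i = saff \<beta>' (of_int k') \<circ> g"
  proof
    fix y
    show "(g \<circ> sgen \<alpha> \<theta> i) y = (saff \<beta>' (of_int k') \<circ> g) y"
      using iso_conj[OF iL, of g c "gam i" "of_int (kk i)" y] g(2) gam_nz[OF i] sgen_wall[OF i] m0
      by (simp add: \<beta>'_def k'_def)
  qed
  have main: "(h \<in> sep (g \<circ> sgen \<alpha> \<theta> i) x) \<longleftrightarrow> (h \<in> sep g x) \<noteq> (fst h \<in> P \<and> (h = (\<beta>', k') \<or> h = (-\<beta>', -k')))" for h
  proof -
    obtain \<beta> k where h: "h = (\<beta>, k)" by (cases h)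
    show ?thesis
    proof (cases "\<beta> \<in> P")
      case False then show ?thesis by (simp add: h sep_def)
    next
      case True
      then have bP: "\<beta> \<in> \<Phi>" using pos_sub by auto
      obtain \<gamma> where ga: "\<gamma> \<in> \<Phi>" "L \<gamma> = \<beta>" using goodLb_surj[OF g(1) bP] by blast
      obtain m :: int where m: "pairing c \<beta> = of_int m" using g(1) bP by (auto simp: goodLb_def elim!: Ints_obtain)
      have pe: "pairing (g y) \<beta> = pairing y \<gamma> + of_int m" for y
      proof -
        have "pairing (L y) \<beta> = pairing y \<gamma>" using iso_pairing[OF iL, of y \<gamma>] ga(2) by simp
        then show ?thesis using g(2) m by (simp add: pairing_add)
      qed
      have e1: "(pairing (g y) \<beta> > of_int k) \<longleftrightarrow> (pairing y \<gamma> > of_int (k - m))" for y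
        using pe[of y] by auto
      have "(h \<in> sep (g \<circ> sgen \<alpha> \<theta> i) x) \<noteq> (h \<in> sep g x) \<longleftrightarrow>
            ((pairing (sgen \<alpha> \<theta> i x) \<gamma> > of_int (k - m)) \<noteq> (pairing x \<gamma> > of_int (k - m)))"
        using True by (simp add: h sep_def e1) blast
      also have "\<dots> \<longleftrightarrow> ((\<gamma> = gam i \<and> k - m = kk i) \<or> (\<gamma> = - gam i \<and> k - m = - kk i))"
        by (rule side_flip[OF x i ga(1)])
      also have "\<dots> \<longleftrightarrow> (h = (\<beta>', k') \<or> h = (-\<beta>', -k'))"
      proof -
        have injL: "inj L" using iso_inj[OF iL] .
        have lin: "linear L" using iL by (simp add: iso_def)
        have a1: "\<gamma> = gam i \<longleftrightarrow> \<beta> = \<beta>'" using injL ga(2) by (auto simp: \<beta>'_def inj_def)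
        have a2: "\<gamma> = - gam i \<longleftrightarrow> \<beta> = - \<beta>'"
        proof -
          have "L (- gam i) = - \<beta>'" using lin by (simp add: \<beta>'_def linear_neg)
          then show ?thesis using injL ga(2) by (metis injD)
        qed
        have m1: "\<beta> = \<beta>' \<Longrightarrow> m = m0" using m m0 by simp
        have m2: "\<beta> = - \<beta>' \<Longrightarrow> m = - m0" using m m0 by (simp add: pairing_uminus2)
        show ?thesis unfolding a1 a2 h using m1 m2 by (auto simp: k'_def)
      qed
      finally show ?thesis using True h by auto
    qed
  qed
  show ?thesis
  proof (cases "\<beta>' \<in> P")
    case True
    have "- \<beta>' \<notin> P" using not_both[OF True] .
    have "\<forall>h. h \<in> sep (g \<circ> sgen \<alpha> \<theta> i) x \<longleftrightarrow> (h \<in> sep g x) \<noteq> (h = (\<beta>', k'))"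
    proof
      fix h
      have "(fst h \<in> P \<and> (h = (\<beta>', k') \<or> h = (-\<beta>', -k'))) \<longleftrightarrow> h = (\<beta>', k')"
        using True \<open>- \<beta>' \<notin> P\<close> by (cases h) auto
      then show "h \<in> sep (g \<circ> sgen \<alpha> \<theta> i) x \<longleftrightarrow> (h \<in> sep g x) \<noteq> (h = (\<beta>', k'))"
        using main[of h] by simp
    qed
    then show ?thesis using True conj by blast
  next
    case False
    then have nP: "- \<beta>' \<in> P" using pos_or_neg[OF b'P] by blast
    have "\<forall>h. h \<in> sep (g \<circ> sgen \<alpha> \<theta> i) x \<longleftrightarrow> (h \<in> sep g x) \<noteq> (h = (-\<beta>', -k'))"
    proof
      fix h
      have "(fst h \<in> P \<and> (h = (\<beta>', k') \<or> h = (-\<beta>', -k'))) \<longleftrightarrow> h = (-\<beta>', -k')"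
        using False nP by (cases h) auto
      then show "h \<in> sep (g \<circ> sgen \<alpha> \<theta> i) x \<longleftrightarrow> (h \<in> sep g x) \<noteq> (h = (-\<beta>', -k'))"
        using main[of h] by simp
    qed
    moreover have "saff \<beta>' (of_int k') = saff (- \<beta>') (of_int (- k'))" using saff_neg[of \<beta>' "of_int k'"] by simp
    ultimately show ?thesis using nP conj by metis
  qed
qed

end


lemma take_Suc_nth: "j < length w \<Longrightarrow> take (Suc j) w = take j w @ [w ! j]"
  by (simp add: take_Suc_conv_app_nth)

context RS begin

lemma wprod_take_Suc: "j < length w \<Longrightarrow> wprod \<alpha> \<theta> (take (Suc j) w) = wprod \<alpha> \<theta> (take j w) \<circ> sgen \<alpha> \<theta> (w ! j)"
  by (simp add: take_Suc_nth wprod_snoc)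

lemma sep_step_w:
  assumes w: "set w \<subseteq> {0..r}" and x: "x \<in> A" and j: "j < length w"
  shows "\<exists>\<beta> k. \<beta> \<in> P \<and> wprod \<alpha> \<theta> (take j w) \<circ> sgen \<alpha> \<theta> (w ! j) = saff \<beta> (of_int k) \<circ> wprod \<alpha> \<theta> (take j w) \<and>
           (\<forall>h. h \<in> sep (wprod \<alpha> \<theta> (take (Suc j) w)) x \<longleftrightarrow> (h \<in> sep (wprod \<alpha> \<theta> (take j w)) x) \<noteq> (h = (\<beta>, k)))"
proof -
  have tw: "set (take j w) \<subseteq> {0..r}" using w by (meson order_trans set_take_subset)
  have i: "w ! j \<in> {0..r}" using w j nth_mem by blast
  have aff: "goodLb (wbarprod \<alpha> \<theta> (take j w)) (wprod \<alpha> \<theta> (take j w) 0)"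
    "\<forall>y. wprod \<alpha> \<theta> (take j w) y = wbarprod \<alpha> \<theta> (take j w) y + wprod \<alpha> \<theta> (take j w) 0"
    using wprod_affine[OF tw] by blast+
  show ?thesis using sep_step[OF aff x i] unfolding wprod_take_Suc[OF j] .
qed

lemma sep_card:
  assumes w: "set w \<subseteq> {0..r}" and x: "x \<in> A"
  shows "finite (sep (wprod \<alpha> \<theta> w) x) \<and> card (sep (wprod \<alpha> \<theta> w) x) \<le> length w"
  using w
proof (induction w rule: rev_induct)
  case Nil
  have e: "sep (wprod \<alpha> \<theta> []) x = {}" using sep_empty[OF x, of id] x by (simp add: id_def)
  show ?case unfolding e by simp
next
  case (snoc i w)
  then have w: "set w \<subseteq> {0..r}" and i: "i \<in> {0..r}" by auto
  note IH = snoc.IH[OF w]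
  have aff: "goodLb (wbarprod \<alpha> \<theta> w) (wprod \<alpha> \<theta> w 0)"
    "\<forall>y. wprod \<alpha> \<theta> w y = wbarprod \<alpha> \<theta> w y + wprod \<alpha> \<theta> w 0"
    using wprod_affine[OF w] by blast+
  obtain H where H: "\<forall>h. h \<in> sep (wprod \<alpha> \<theta> w \<circ> sgen \<alpha> \<theta> i) x \<longleftrightarrow> (h \<in> sep (wprod \<alpha> \<theta> w) x) \<noteq> (h = H)"
    using sep_step[OF aff x i] by blast
  have sub: "sep (wprod \<alpha> \<theta> (w @ [i])) x \<subseteq> insert H (sep (wprod \<alpha> \<theta> w) x)"
    using H by (auto simp: wprod_snoc)
  have fin: "finite (insert H (sep (wprod \<alpha> \<theta> w) x))" using IH by simp
  have "card (sep (wprod \<alpha> \<theta> (w @ [i])) x) \<le> card (insert H (sep (wprod \<alpha> \<theta> w) x))"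
    by (rule card_mono[OF fin sub])
  also have "\<dots> \<le> Suc (card (sep (wprod \<alpha> \<theta> w) x))" using IH by (simp add: card_insert_if)
  finally show ?case using IH finite_subset[OF sub fin] by simp
qed

lemma deletion:
  assumes w: "set w \<subseteq> {0..r}" and ab: "a < b" "b < length w" and nz0: "\<beta> \<noteq> 0"
    and ha: "wprod \<alpha> \<theta> (take a w) \<circ> sgen \<alpha> \<theta> (w ! a) = saff \<beta> k \<circ> wprod \<alpha> \<theta> (take a w)"
    and hb: "wprod \<alpha> \<theta> (take b w) \<circ> sgen \<alpha> \<theta> (w ! b) = saff \<beta> k \<circ> wprod \<alpha> \<theta> (take b w)"
  shows "wprod \<alpha> \<theta> w = wprod \<alpha> \<theta> (take a w @ drop (Suc a) (take b w) @ drop (Suc b) w)"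
proof -
  let ?g = "\<lambda>j. wprod \<alpha> \<theta> (take j w)"
  let ?r = "saff \<beta> k"
  define M where "M = wprod \<alpha> \<theta> (drop (Suc a) (take b w))"
  define D where "D = wprod \<alpha> \<theta> (drop (Suc b) w)"
  have rr: "?r \<circ> ?r = id" using saff_invol_comp[OF nz0] .
  have tb: "take b w = take (Suc a) w @ drop (Suc a) (take b w)"
  proof -
    have "take (Suc a) (take b w) = take (Suc a) w" using ab by (simp add: min_def)
    then show ?thesis by (metis append_take_drop_id)
  qed
  have gb: "?g b = ?g (Suc a) \<circ> M" using tb M_def by (metis wprod_append)
  have ga1: "?g (Suc a) = ?r \<circ> ?g a" using ha wprod_take_Suc[of a w] ab by simp
  have gb1: "?g (Suc b) = ?r \<circ> ?g b" using hb wprod_take_Suc[of b w] ab by simp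
  have "?g (Suc b) = ?r \<circ> ?r \<circ> ?g a \<circ> M" using gb1 gb ga1 by (simp add: comp_assoc)
  also have "\<dots> = ?g a \<circ> M" using rr by simp
  finally have gsb: "?g (Suc b) = ?g a \<circ> M" .
  have "wprod \<alpha> \<theta> w = ?g (Suc b) \<circ> D" unfolding D_def by (metis append_take_drop_id wprod_append)
  also have "\<dots> = ?g a \<circ> M \<circ> D" using gsb by simp
  also have "\<dots> = wprod \<alpha> \<theta> (take a w @ drop (Suc a) (take b w) @ drop (Suc b) w)"
    by (simp add: M_def D_def wprod_append comp_assoc)
  finally show ?thesis .
qed

lemma stab:
  assumes "set w \<subseteq> {0..r}" and x: "x \<in> A" and "wprod \<alpha> \<theta> w x \<in> A"
  shows "wprod \<alpha> \<theta> w = id"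
  using assms(1,3)
proof (induction "length w" arbitrary: w rule: less_induct)
  case less
  note w = less.prems(1) and wx = less.prems(2)
  let ?n = "length w"
  let ?g = "\<lambda>j. wprod \<alpha> \<theta> (take j w)"
  show ?case
  proof (cases "?n = 0")
    case True then show ?thesis by simp
  next
    case False
    define Q where "Q = (\<lambda>j (h::'a \<times> int). fst h \<in> P \<and> ?g j \<circ> sgen \<alpha> \<theta> (w ! j) = saff (fst h) (of_int (snd h)) \<circ> ?g j \<and>
           (\<forall>h'. h' \<in> sep (?g (Suc j)) x \<longleftrightarrow> (h' \<in> sep (?g j) x) \<noteq> (h' = h)))"
    have "\<forall>j. \<exists>h. j < ?n \<longrightarrow> Q j h"
    proof
      fix j
      show "\<exists>h. j < ?n \<longrightarrow> Q j h"
      proof (cases "j < ?n")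
        case True
        obtain \<beta> k where "\<beta> \<in> P \<and> ?g j \<circ> sgen \<alpha> \<theta> (w ! j) = saff \<beta> (of_int k) \<circ> ?g j \<and>
           (\<forall>h. h \<in> sep (?g (Suc j)) x \<longleftrightarrow> (h \<in> sep (?g j) x) \<noteq> (h = (\<beta>, k)))"
          using sep_step_w[OF w x True] by blast
        then have "Q j (\<beta>, k)" unfolding Q_def by simp
        then show ?thesis by blast
      qed simp
    qed
    then obtain H where H: "\<forall>j. j < ?n \<longrightarrow> Q j (H j)" by (metis choice)
    show ?thesis
    proof (cases "inj_on H {..<?n}")
      case True
      have "j \<le> ?n \<Longrightarrow> sep (?g j) x = H ` {..<j}" for j
      proof (induction j)
        case 0
        show ?case using sep_empty[OF x, of id] x by (simp add: id_def)
      next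
        case (Suc j)
        then have jn: "j < ?n" by simp
        have IH: "sep (?g j) x = H ` {..<j}" using Suc by simp
        have step: "\<forall>h'. h' \<in> sep (?g (Suc j)) x \<longleftrightarrow> (h' \<in> sep (?g j) x) \<noteq> (h' = H j)"
          using H jn unfolding Q_def by blast
        have nin: "H j \<notin> H ` {..<j}"
        proof
          assume "H j \<in> H ` {..<j}"
          then obtain i where "i < j" "H j = H i" by auto
          then show False using True jn inj_onD[OF True, of j i] by auto
        qed
        show ?case
        proof
          show "sep (?g (Suc j)) x \<subseteq> H ` {..<Suc j}"
            using step IH by (auto simp: lessThan_Suc)
        next
          show "H ` {..<Suc j} \<subseteq> sep (?g (Suc j)) x"
          proof
            fix h assume "h \<in> H ` {..<Suc j}"
            then have "h = H j \<or> h \<in> H ` {..<j}" by (metis image_insert insert_iff lessThan_Suc)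
            then show "h \<in> sep (?g (Suc j)) x"
            proof
              assume "h = H j" then show ?thesis using step[rule_format, of h] IH nin by simp
            next
              assume hin: "h \<in> H ` {..<j}"
              then have "h \<noteq> H j" using nin by blast
              then show ?thesis using step[rule_format, of h] IH hin by simp
            qed
          qed
        qed
      qed
      then have "sep (?g ?n) x = H ` {..<?n}" by blast
      moreover have "sep (?g ?n) x = {}" using sep_empty[OF x] wx by simp
      ultimately have "{..<?n} = {}" by simp
      then show ?thesis using \<open>?n \<noteq> 0\<close> lessThan_empty_iff by blast
    next
      case False
      then obtain a b where ab0: "a < ?n" "b < ?n" "a \<noteq> b" "H a = H b" by (auto simp: inj_on_def)
      obtain a' b' where ab: "a' < b'" "b' < ?n" "H a' = H b'"
      proof (cases "a < b")
        case True then show ?thesis using that ab0 by blast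
      next
        case False then show ?thesis using that[of b a] ab0 by auto
      qed
      have Qa: "Q a' (H a')" using H ab(1,2) by simp
      have Qb: "Q b' (H b')" using H ab(2) by simp
      define \<beta> where "\<beta> = fst (H a')"
      define k where "k = snd (H a')"
      have bP: "\<beta> \<in> P" using Qa by (simp add: Q_def \<beta>_def)
      have bnz: "\<beta> \<noteq> 0" using bP pos_sub nz by blast
      have ha: "?g a' \<circ> sgen \<alpha> \<theta> (w ! a') = saff \<beta> (of_int k) \<circ> ?g a'" using Qa by (simp add: Q_def \<beta>_def k_def)
      have hb: "?g b' \<circ> sgen \<alpha> \<theta> (w ! b') = saff \<beta> (of_int k) \<circ> ?g b'" using Qb ab(3) by (simp add: Q_def \<beta>_def k_def)
      define w' where "w' = take a' w @ drop (Suc a') (take b' w) @ drop (Suc b') w"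
      have eq: "wprod \<alpha> \<theta> w = wprod \<alpha> \<theta> w'"
        using deletion[OF w ab(1,2) bnz ha hb] w'_def by simp
      have len: "length w' < ?n" using ab by (simp add: w'_def)
      have sw: "set w' \<subseteq> {0..r}"
      proof -
        have "set w' \<subseteq> set w" unfolding w'_def
          by (auto dest: in_set_takeD in_set_dropD)
        then show ?thesis using w by blast
      qed
      have "wprod \<alpha> \<theta> w' = id" using less.hyps[OF len sw] wx eq by simp
      then show ?thesis using eq by simp
    qed
  qed
qed

end


lemma aff_hit:
  fixes C D K s1 s2 :: real
  assumes "s1 \<le> s2" and "(C + s1 * D \<le> K \<and> K \<le> C + s2 * D) \<or> (C + s2 * D \<le> K \<and> K \<le> C + s1 * D)"
  shows "\<exists>x. s1 \<le> x \<and> x \<le> s2 \<and> C + x * D = K"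
proof -
  have c: "continuous_on {s1..s2} (\<lambda>t. C + t * D)" by (intro continuous_intros)
  from assms(2) show ?thesis
  proof
    assume "C + s1 * D \<le> K \<and> K \<le> C + s2 * D"
    then show ?thesis using IVT'[of "\<lambda>t. C + t * D" s1 K s2] assms(1) c by auto
  next
    assume "C + s2 * D \<le> K \<and> K \<le> C + s1 * D"
    then show ?thesis using IVT2'[of "\<lambda>t. C + t * D" s2 K s1] assms(1) c by auto
  qed
qed

lemma aff_stay:
  fixes C D a b s0 :: real
  assumes ab: "a < s0" "s0 < b" and v0: "0 < C + s0 * D" "C + s0 * D < 1"
    and ni: "\<forall>s. a < s \<and> s < b \<longrightarrow> C + s * D \<noteq> 0 \<and> C + s * D \<noteq> 1"
    and s: "a < s" "s < b"
  shows "0 < C + s * D \<and> C + s * D < 1"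
proof (rule ccontr)
  assume n: "\<not> ?thesis"
  have "\<exists>x. a < x \<and> x < b \<and> (C + x * D = 0 \<or> C + x * D = 1)"
  proof (cases "C + s * D \<le> 0")
    case True
    show ?thesis
    proof (cases "s0 \<le> s")
      case True
      then obtain x where "s0 \<le> x" "x \<le> s" "C + x * D = 0" using aff_hit[of s0 s C D 0] v0 \<open>C + s * D \<le> 0\<close> by auto
      then show ?thesis using ab s by (intro exI[of _ x]) auto
    next
      case False
      then obtain x where "s \<le> x" "x \<le> s0" "C + x * D = 0" using aff_hit[of s s0 C D 0] v0 \<open>C + s * D \<le> 0\<close> by auto
      then show ?thesis using ab s by (intro exI[of _ x]) auto
    qed
  next
    case False
    then have g1: "C + s * D \<ge> 1" using n by auto
    show ?thesis
    proof (cases "s0 \<le> s")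
      case True
      then obtain x where "s0 \<le> x" "x \<le> s" "C + x * D = 1" using aff_hit[of s0 s C D 1] v0 g1 by auto
      then show ?thesis using ab s by (intro exI[of _ x]) auto
    next
      case False
      then obtain x where "s \<le> x" "x \<le> s0" "C + x * D = 1" using aff_hit[of s s0 C D 1] v0 g1 by auto
      then show ?thesis using ab s by (intro exI[of _ x]) auto
    qed
  qed
  then show False using ni by blast
qed

lemma aff_close:
  fixes C D a b :: real
  assumes ab: "a < b" and inn: "\<forall>s. a < s \<and> s < b \<longrightarrow> 0 < C + s * D \<and> C + s * D < 1"
  shows "0 \<le> C + b * D \<and> C + b * D \<le> 1" "0 \<le> C + a * D \<and> C + a * D \<le> 1"
proof -
  define m where "m = (a + b) / 2"
  have m: "a < m" "m < b" using ab by (auto simp: m_def)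
  have vm: "0 < C + m * D" "C + m * D < 1" using inn m by auto
  show "0 \<le> C + b * D \<and> C + b * D \<le> 1"
  proof (rule ccontr)
    assume "\<not> ?thesis"
    then have "C + b * D < 0 \<or> C + b * D > 1" by auto
    then obtain x K where x: "m \<le> x" "x \<le> b" "C + x * D = K" and K: "K = 0 \<or> K = 1" and Kb: "C + b * D \<noteq> K"
    proof
      assume "C + b * D < 0"
      then obtain x where "m \<le> x" "x \<le> b" "C + x * D = 0" using aff_hit[of m b C D 0] vm m by auto
      then show ?thesis using that[of x 0] \<open>C + b * D < 0\<close> by auto
    next
      assume "C + b * D > 1"
      then obtain x where "m \<le> x" "x \<le> b" "C + x * D = 1" using aff_hit[of m b C D 1] vm m by auto
      then show ?thesis using that[of x 1] \<open>C + b * D > 1\<close> by auto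
    qed
    then have "x \<noteq> b" by auto
    then have "a < x \<and> x < b" using x m by auto
    then show False using inn x K by auto
  qed
  show "0 \<le> C + a * D \<and> C + a * D \<le> 1"
  proof (rule ccontr)
    assume "\<not> ?thesis"
    then have "C + a * D < 0 \<or> C + a * D > 1" by auto
    then obtain x K where x: "a \<le> x" "x \<le> m" "C + x * D = K" and K: "K = 0 \<or> K = 1" and Kb: "C + a * D \<noteq> K"
    proof
      assume "C + a * D < 0"
      then obtain x where "a \<le> x" "x \<le> m" "C + x * D = 0" using aff_hit[of a m C D 0] vm m by auto
      then show ?thesis using that[of x 0] \<open>C + a * D < 0\<close> by auto
    next
      assume "C + a * D > 1"
      then obtain x where "a \<le> x" "x \<le> m" "C + x * D = 1" using aff_hit[of a m C D 1] vm m by auto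
      then show ?thesis using that[of x 1] \<open>C + a * D > 1\<close> by auto
    qed
    then have "x \<noteq> a" by auto
    then have "a < x \<and> x < b" using x m by auto
    then show False using inn x K by auto
  qed
qed

lemma aff_start:
  fixes C D a b :: real
  assumes ab: "a < b"
    and st: "(0 < C + a * D \<and> C + a * D < 1) \<or> (C + a * D = 0 \<and> D > 0) \<or> (C + a * D = 1 \<and> D < 0)"
  shows "\<exists>s0. a < s0 \<and> s0 < b \<and> 0 < C + s0 * D \<and> C + s0 * D < 1"
proof -
  have lim: "((\<lambda>t. C + t * D) \<longlongrightarrow> C + a * D) (at_right a)"
    by (intro tendsto_intros)
  have ev: "eventually (\<lambda>t. 0 < C + t * D \<and> C + t * D < 1) (at_right a)"
    using st
  proof (elim disjE conjE)
    assume "0 < C + a * D" "C + a * D < 1"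
    then show ?thesis using order_tendstoD[OF lim] by (auto intro: eventually_conj)
  next
    assume h: "C + a * D = 0" "D > 0"
    have "eventually (\<lambda>t. C + t * D < 1) (at_right a)" using order_tendstoD(2)[OF lim] h by simp
    moreover have "eventually (\<lambda>t. 0 < C + t * D) (at_right a)"
    proof -
      have "eventually (\<lambda>t. a < t) (at_right a)" by (rule eventually_at_right_less)
      then show ?thesis
      proof (rule eventually_mono)
        fix t assume "a < t"
        then have "a * D < t * D" using h(2) by simp
        then show "0 < C + t * D" using h(1) by linarith
      qed
    qed
    ultimately show ?thesis by (auto intro: eventually_conj)
  next
    assume h: "C + a * D = 1" "D < 0"
    have "eventually (\<lambda>t. 0 < C + t * D) (at_right a)" using order_tendstoD(1)[OF lim] h by simp
    moreover have "eventually (\<lambda>t. C + t * D < 1) (at_right a)"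
    proof -
      have "eventually (\<lambda>t. a < t) (at_right a)" by (rule eventually_at_right_less)
      then show ?thesis
      proof (rule eventually_mono)
        fix t assume "a < t"
        then have "t * D < a * D" using h(2) by simp
        then show "C + t * D < 1" using h(1) by linarith
      qed
    qed
    ultimately show ?thesis by (auto intro: eventually_conj)
  qed
  have "eventually (\<lambda>t. a < t \<and> t < b) (at_right a)"
    using eventually_at_right_less[of a] eventually_at_right[of a b] ab
    by (auto intro: eventually_conj simp: eventually_at_right_field)
  then have "eventually (\<lambda>t. (a < t \<and> t < b) \<and> (0 < C + t * D \<and> C + t * D < 1)) (at_right a)"
    using ev by (rule eventually_conj)
  then obtain t where "(a < t \<and> t < b) \<and> (0 < C + t * D \<and> C + t * D < 1)"
    using eventually_happens'[of "at_right a"] by fastforce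
  then show ?thesis by blast
qed



lemma sorted_wrt_less_nth:
  assumes "sorted_wrt R xs" "i < j" "j < length xs"
  shows "R (xs ! i) (xs ! j)"
  using assms by (simp add: sorted_wrt_iff_nth_less)

locale PATH = RS +
  fixes lam :: 'a and p :: 'a and ps :: "('a \<times> int) list"
  assumes wl: "lam \<in> weight_lattice \<Phi>"
    and pA: "p \<in> A"
    and setps: "set ps = R_pairs \<Phi> \<alpha> r lam"
    and srt: "sorted_wrt (\<lambda>h1 h2. (pairing p (fst h1) - of_int (snd h1)) / pairing lam (fst h1)
                              < (pairing p (fst h2) - of_int (snd h2)) / pairing lam (fst h2)) ps"
begin

definition TT :: "'a \<times> int \<Rightarrow> real" where
  "TT h = (pairing p (fst h) - of_int (snd h)) / pairing lam (fst h)"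

definition xt :: "real \<Rightarrow> 'a" where "xt t = p - t *\<^sub>R lam"

abbreviation "l \<equiv> length ps"

definition tau :: "nat \<Rightarrow> real" where
  "tau j = (if j = 0 then 0 else if j \<le> l then TT (ps ! (j - 1)) else 1)"

lemma pairing_xt: "pairing (xt t) \<beta> = pairing p \<beta> - t * pairing lam \<beta>"
  by (simp add: xt_def pairing_diff pairing_scale)

lemma lam_int: "\<beta> \<in> \<Phi> \<Longrightarrow> pairing lam \<beta> \<in> \<int>"
  using wl by (simp add: weight_lattice_def)

lemma TT_mono: "i < j \<Longrightarrow> j < l \<Longrightarrow> TT (ps ! i) < TT (ps ! j)"
  using sorted_wrt_less_nth[OF srt] by (simp add: TT_def)

lemma TT_inj: "i < l \<Longrightarrow> j < l \<Longrightarrow> TT (ps ! i) = TT (ps ! j) \<Longrightarrow> i = j"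
  using TT_mono by (metis less_irrefl linorder_neqE_nat)

lemma Rp_facts:
  assumes h: "(\<beta>, k) \<in> R_pairs \<Phi> \<alpha> r lam"
  shows "\<beta> \<in> P" "pairing lam \<beta> \<noteq> 0" "0 < TT (\<beta>, k)" "TT (\<beta>, k) < 1"
    "pairing (xt (TT (\<beta>, k))) \<beta> = of_int k" "pairing lam \<beta> > 0 \<longleftrightarrow> k \<le> 0"
proof -
  have b: "\<beta> \<in> P" and c: "(pairing lam \<beta> > 0 \<and> 0 \<ge> k \<and> real_of_int k > - pairing lam \<beta>) \<or>
      (pairing lam \<beta> < 0 \<and> 0 < k \<and> real_of_int k \<le> - pairing lam \<beta>)"
    using h by (auto simp: R_pairs_def)
  show "\<beta> \<in> P" by (rule b)
  obtain n :: int where n: "pairing lam \<beta> = of_int n" using lam_int b pos_sub by (blast elim: Ints_obtain)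
  have v: "0 < pairing p \<beta>" "pairing p \<beta> < 1" using A_pair[OF pA b] by auto
  show nz: "pairing lam \<beta> \<noteq> 0" using c by auto
  show "pairing lam \<beta> > 0 \<longleftrightarrow> k \<le> 0" using c by auto
  have c': "(n > 0 \<and> k \<le> 0 \<and> k > - n) \<or> (n < 0 \<and> 0 < k \<and> k \<le> - n)" using c n by auto
  show "0 < TT (\<beta>, k)"
  proof -
    from c' show ?thesis
    proof
      assume a: "n > 0 \<and> k \<le> 0 \<and> k > - n"
      then have "pairing p \<beta> - of_int k > 0" using v by (simp add: add_pos_nonneg)
      then show ?thesis using a n by (simp add: TT_def)
    next
      assume a: "n < 0 \<and> 0 < k \<and> k \<le> - n"
      then have "(1::real) \<le> of_int k" by simp
      then have "pairing p \<beta> - of_int k < 0" using v by simp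
      then show ?thesis using a n by (simp add: TT_def divide_neg_neg)
    qed
  qed
  show "TT (\<beta>, k) < 1"
  proof -
    from c' show ?thesis
    proof
      assume a: "n > 0 \<and> k \<le> 0 \<and> k > - n"
      then have "(of_int k :: real) \<ge> 1 - of_int n" by linarith
      then have "pairing p \<beta> - of_int k < of_int n" using v by simp
      then show ?thesis using a n by (simp add: TT_def divide_less_eq)
    next
      assume a: "n < 0 \<and> 0 < k \<and> k \<le> - n"
      then have "(of_int k :: real) \<le> - of_int n" by linarith
      then have "pairing p \<beta> - of_int k > of_int n" using v by simp
      then show ?thesis using a n by (simp add: TT_def divide_less_eq)
    qed
  qed
  show "pairing (xt (TT (\<beta>, k))) \<beta> = of_int k"
    using nz by (simp add: pairing_xt TT_def)
qed

lemma ps_in: "j < l \<Longrightarrow> ps ! j \<in> R_pairs \<Phi> \<alpha> r lam"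
  using setps nth_mem by blast

lemma F1:
  assumes t: "0 < t" "t \<le> 1" and b: "\<beta> \<in> P" and e: "pairing (xt t) \<beta> = of_int k"
  shows "\<exists>j<l. t = TT (ps ! j) \<and> ps ! j = (\<beta>, k)"
proof -
  obtain n :: int where n: "pairing lam \<beta> = of_int n" using lam_int b pos_sub by (blast elim: Ints_obtain)
  have v: "0 < pairing p \<beta>" "pairing p \<beta> < 1" using A_pair[OF pA b] by auto
  have e': "pairing p \<beta> - t * of_int n = of_int k" using e n by (simp add: pairing_xt)
  have n0: "n \<noteq> 0"
  proof
    assume "n = 0" then have "pairing p \<beta> = of_int k" using e' by simp
    then show False using v int_noteq[of 0 "pairing p \<beta>" k] by simp
  qed
  have mem: "(\<beta>, k) \<in> R_pairs \<Phi> \<alpha> r lam"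
  proof (cases "n > 0")
    case True
    have "t * of_int n > 0" using t True by simp
    then have "of_int k < (1::real)" using e' v by linarith
    then have k0: "k \<le> 0" by simp
    have "t * of_int n \<le> of_int n" using t True by simp
    then have "of_int k > - (of_int n :: real)" using e' v by linarith
    then show ?thesis using b True k0 n by (simp add: R_pairs_def)
  next
    case False
    then have nn: "n < 0" using n0 by simp
    have "t * of_int n < 0" using t nn by (simp add: mult_pos_neg)
    then have "of_int k > (0::real)" using e' v by linarith
    then have k0: "k > 0" by simp
    have "t * of_int n \<ge> of_int n" using t nn by (simp add: mult_le_cancel_right2)
    then have "of_int k < (1::real) - of_int n" using e' v by linarith
    then have "k \<le> - n" by linarith
    then show ?thesis using b nn k0 n by (simp add: R_pairs_def)
  qed
  then obtain j where j: "j < l" "ps ! j = (\<beta>, k)" using setps by (metis in_set_conv_nth)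
  have "t = TT (\<beta>, k)" using e' n0 n by (simp add: TT_def field_simps)
  then show ?thesis using j by auto
qed

lemma F1':
  assumes t: "0 < t" "t \<le> 1" and b: "\<beta> \<in> \<Phi>" and e: "pairing (xt t) \<beta> = of_int k"
  shows "\<exists>j<l. t = TT (ps ! j) \<and> (ps ! j = (\<beta>, k) \<or> ps ! j = (- \<beta>, - k))"
proof -
  from pos_or_neg[OF b] show ?thesis
  proof
    assume "\<beta> \<in> P" then show ?thesis using F1[OF t _ e] by blast
  next
    assume nb: "- \<beta> \<in> P"
    have "pairing (xt t) (- \<beta>) = of_int (- k)" using e by (simp add: pairing_uminus2)
    then show ?thesis using F1[OF t nb] by fastforce
  qed
qed

lemma tau_Suc: "j < l \<Longrightarrow> tau (Suc j) = TT (ps ! j)"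
  by (simp add: tau_def)

lemma tau_mono: "i < j \<Longrightarrow> j \<le> Suc l \<Longrightarrow> tau i < tau j"
proof -
  assume ij: "i < j" "j \<le> Suc l"
  show ?thesis
  proof (cases "j = Suc l")
    case True
    show ?thesis
    proof (cases "i = 0")
      case True then show ?thesis using \<open>j = Suc l\<close> by (simp add: tau_def)
    next
      case False
      then have "i - 1 < l" using ij True by simp
      then have "TT (ps ! (i - 1)) < 1" using Rp_facts(4)[of "fst (ps ! (i - 1))" "snd (ps ! (i - 1))"] ps_in by simp
      then show ?thesis using True False ij by (simp add: tau_def)
    qed
  next
    case False
    then have jl: "j \<le> l" using ij by simp
    show ?thesis
    proof (cases "i = 0")
      case True
      have "j - 1 < l" using jl ij by simp
      then have "0 < TT (ps ! (j - 1))" using Rp_facts(3)[of "fst (ps ! (j - 1))" "snd (ps ! (j - 1))"] ps_in by simp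
      then show ?thesis using True ij jl by (simp add: tau_def)
    next
      case False
      have "TT (ps ! (i - 1)) < TT (ps ! (j - 1))" using TT_mono[of "i - 1" "j - 1"] ij jl False by simp
      then show ?thesis using False ij jl by (simp add: tau_def)
    qed
  qed
qed

lemma tau_range: "j \<le> Suc l \<Longrightarrow> 0 \<le> tau j \<and> tau j \<le> 1"
proof -
  assume j: "j \<le> Suc l"
  have "tau 0 \<le> tau j" using tau_mono[of 0 j] j by (cases "j = 0") auto
  moreover have "tau j \<le> tau (Suc l)" using tau_mono[of j "Suc l"] j by (cases "j = Suc l") auto
  ultimately show ?thesis by (simp add: tau_def)
qed

lemma nohyp:
  assumes a: "a \<le> l" and t: "tau a < t" "t < tau (Suc a)" and g: "\<gamma> \<in> \<Phi>"
  shows "pairing (xt t) \<gamma> \<noteq> of_int m"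
proof
  assume e: "pairing (xt t) \<gamma> = of_int m"
  have t01: "0 < t" "t \<le> 1" using tau_range[of a] tau_range[of "Suc a"] a t by auto
  obtain j where j: "j < l" "t = TT (ps ! j)" using F1'[OF t01 g e] by blast
  have "t = tau (Suc j)" using j tau_Suc by simp
  then have "a < Suc j"
  proof -
    have "\<not> Suc j < a" using t tau_mono[of "Suc j" a] a \<open>t = tau (Suc j)\<close> by auto
    moreover have "a \<noteq> Suc j" using t \<open>t = tau (Suc j)\<close> by auto
    ultimately show ?thesis by simp
  qed
  moreover have "Suc j < Suc a"
  proof -
    have "\<not> Suc a < Suc j" using t tau_mono[of "Suc a" "Suc j"] j \<open>t = tau (Suc j)\<close> by auto
    moreover have "Suc a \<noteq> Suc j" using t \<open>t = tau (Suc j)\<close> by auto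
    ultimately show ?thesis by simp
  qed
  ultimately show False by simp
qed

lemma nohyp1:
  assumes g: "\<gamma> \<in> \<Phi>"
  shows "pairing (xt 1) \<gamma> \<noteq> of_int m"
proof
  assume e: "pairing (xt 1) \<gamma> = of_int m"
  obtain j where j: "j < l" "1 = TT (ps ! j)" using F1'[OF _ _ g e] by auto
  then show False using Rp_facts(4)[of "fst (ps ! j)" "snd (ps ! j)"] ps_in by simp
qed

end


context RS begin

lemma pairing_wprod:
  assumes w: "set w \<subseteq> {0..r}"
  shows "pairing (wprod \<alpha> \<theta> w y) (wbarprod \<alpha> \<theta> w \<gamma>) = pairing y \<gamma> + pairing (wprod \<alpha> \<theta> w 0) (wbarprod \<alpha> \<theta> w \<gamma>)"
proof -
  have aff: "goodLb (wbarprod \<alpha> \<theta> w) (wprod \<alpha> \<theta> w 0)"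
    "\<forall>y. wprod \<alpha> \<theta> w y = wbarprod \<alpha> \<theta> w y + wprod \<alpha> \<theta> w 0" using wprod_affine[OF w] by blast+
  have "iso (wbarprod \<alpha> \<theta> w)" using aff(1) by (simp add: goodLb_def)
  then show ?thesis using aff(2)[rule_format, of y] by (simp add: pairing_add iso_pairing)
qed

lemma wbar_in: "set w \<subseteq> {0..r} \<Longrightarrow> \<gamma> \<in> \<Phi> \<Longrightarrow> wbarprod \<alpha> \<theta> w \<gamma> \<in> \<Phi>"
  using conjunct1[OF wprod_affine] by (auto simp: goodLb_def)

lemma wprod0_int: "set w \<subseteq> {0..r} \<Longrightarrow> \<gamma> \<in> \<Phi> \<Longrightarrow> pairing (wprod \<alpha> \<theta> w 0) \<gamma> \<in> \<int>"
  using conjunct1[OF wprod_affine] by (auto simp: goodLb_def)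

lemma G_inv:
  assumes w: "set w \<subseteq> {0..r}" and b: "\<beta> \<in> \<Phi>" and e: "pairing (wprod \<alpha> \<theta> (rev w) y) \<beta> = of_int k"
  shows "\<exists>\<gamma>\<in>\<Phi>. \<exists>m::int. pairing y \<gamma> = of_int m"
proof -
  let ?y = "wprod \<alpha> \<theta> (rev w) y"
  have "pairing (wprod \<alpha> \<theta> w ?y) (wbarprod \<alpha> \<theta> w \<beta>) = pairing ?y \<beta> + pairing (wprod \<alpha> \<theta> w 0) (wbarprod \<alpha> \<theta> w \<beta>)"
    by (rule pairing_wprod[OF w])
  moreover have "wprod \<alpha> \<theta> w ?y = y" by (rule wprod_inv_rev[OF w])
  moreover obtain m where "pairing (wprod \<alpha> \<theta> w 0) (wbarprod \<alpha> \<theta> w \<beta>) = of_int m"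
    using wprod0_int[OF w wbar_in[OF w b]] by (blast elim: Ints_obtain)
  ultimately have "pairing y (wbarprod \<alpha> \<theta> w \<beta>) = of_int (k + m)" using e by simp
  then show ?thesis using wbar_in[OF w b] by blast
qed

lemma ridx_pos: "y \<in> A \<Longrightarrow> i \<in> {0..r} \<Longrightarrow> pairing y (root_idx \<alpha> \<theta> i) > of_int (cc i)"
proof -
  assume y: "y \<in> A" and i: "i \<in> {0..r}"
  show ?thesis
  proof (cases "i = 0")
    case True
    then show ?thesis using A_pair[OF y theta_pos] by (simp add: root_idx_def cc_def pairing_uminus2)
  next
    case False
    then have "i \<in> {1..r}" using i by auto
    then show ?thesis using A_pair[OF y alpha_pos] False by (simp add: root_idx_def cc_def)
  qed
qed

lemma ridx_gam: "(root_idx \<alpha> \<theta> i = gam i \<and> cc i = kk i) \<or> (root_idx \<alpha> \<theta> i = - gam i \<and> cc i = - kk i)"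
  by (simp add: root_idx_def cc_def gam_def kk_def)

end

context PATH begin

lemma step:
  assumes a: "a < l" and w: "set w \<subseteq> {0..r}"
    and inv: "\<forall>t. tau a < t \<and> t < tau (Suc a) \<longrightarrow> wprod \<alpha> \<theta> (rev w) (xt t) \<in> A"
  shows "\<exists>i\<in>{0..r}. wprod \<alpha> \<theta> w \<circ> sgen \<alpha> \<theta> i = saff (fst (ps ! a)) (of_int (snd (ps ! a))) \<circ> wprod \<alpha> \<theta> w \<and>
     wbarprod \<alpha> \<theta> w (root_idx \<alpha> \<theta> i) = bmap (ps ! a) \<and>
     (\<forall>t. tau (Suc a) < t \<and> t < tau (Suc (Suc a)) \<longrightarrow> sgen \<alpha> \<theta> i (wprod \<alpha> \<theta> (rev w) (xt t)) \<in> A)"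
proof -
  obtain \<beta>a ka where pa: "ps ! a = (\<beta>a, ka)" by (cases "ps ! a")
  have mem: "(\<beta>a, ka) \<in> R_pairs \<Phi> \<alpha> r lam" using ps_in[OF a] pa by simp
  note Rp = Rp_facts[OF mem]
  have baP: "\<beta>a \<in> \<Phi>" using Rp(1) pos_sub by auto
  define ts where "ts = TT (\<beta>a, ka)"
  have ts_tau: "tau (Suc a) = ts" using tau_Suc[OF a] pa ts_def by simp
  have lt: "tau a < ts" using tau_mono[of a "Suc a"] a ts_tau by simp
  have lt2: "ts < tau (Suc (Suc a))" using tau_mono[of "Suc a" "Suc (Suc a)"] a ts_tau by simp
  have ts01: "0 < ts" "ts \<le> 1" using Rp(3,4) ts_def by auto
  define L where "L = wbarprod \<alpha> \<theta> w"
  define c where "c = wprod \<alpha> \<theta> w 0"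
  have rw: "set (rev w) \<subseteq> {0..r}" using w by simp
  define L' where "L' = wbarprod \<alpha> \<theta> (rev w)"
  define c' where "c' = wprod \<alpha> \<theta> (rev w) 0"
  have aff': "goodLb L' c'" "\<forall>y. wprod \<alpha> \<theta> (rev w) y = L' y + c'"
    using wprod_affine[OF rw] unfolding L'_def c'_def by blast+
  have linL': "linear L'" using aff'(1) by (simp add: goodLb_def iso_def)
  define f where "f t = wprod \<alpha> \<theta> (rev w) (xt t)" for t
  have f_aff: "pairing (f t) \<beta> = pairing (f 0) \<beta> + t * (- pairing (L' lam) \<beta>)" for t \<beta>
  proof -
    have "f t = L' p - t *\<^sub>R L' lam + c'" unfolding f_def xt_def
      using aff'(2)[rule_format, of "p - t *\<^sub>R lam"] linL' by (simp add: linear_diff linear_scale)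
    moreover have "f 0 = L' p + c'" unfolding f_def xt_def using aff'(2)[rule_format, of p] by simp
    ultimately show ?thesis by (simp add: pairing_add pairing_diff pairing_scale)
  qed
  have inA: "f s \<in> A" if "tau a < s" "s < ts" for s using inv that ts_tau f_def by simp
  define z where "z = f ts"
  have uz: "wprod \<alpha> \<theta> w z = xt ts" unfolding z_def f_def using wprod_inv_rev[OF w] by simp
  have S1: "0 \<le> pairing z \<beta> \<and> pairing z \<beta> \<le> 1" if b: "\<beta> \<in> P" for \<beta>
  proof -
    have "\<forall>s. tau a < s \<and> s < ts \<longrightarrow> 0 < pairing (f 0) \<beta> + s * (- pairing (L' lam) \<beta>) \<and> pairing (f 0) \<beta> + s * (- pairing (L' lam) \<beta>) < 1"
      using inA A_pair[OF _ b] f_aff by metis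
    from aff_close(1)[OF lt this] show ?thesis unfolding z_def f_aff[of ts] .
  qed
  have S2: "(L \<gamma> = \<beta>a \<and> of_int m + pairing c (L \<gamma>) = of_int ka) \<or> (L \<gamma> = - \<beta>a \<and> of_int m + pairing c (L \<gamma>) = - of_int ka)"
    if g: "\<gamma> \<in> \<Phi>" and e: "pairing z \<gamma> = of_int m" for \<gamma> m
  proof -
    have LgP: "L \<gamma> \<in> \<Phi>" using wbar_in[OF w g] L_def by simp
    obtain mb :: int where mb: "pairing c (L \<gamma>) = of_int mb" using wprod0_int[OF w LgP] c_def by (blast elim: Ints_obtain)
    have "pairing (xt ts) (L \<gamma>) = pairing z \<gamma> + pairing c (L \<gamma>)"
      using pairing_wprod[OF w, of z \<gamma>] uz L_def c_def by simp
    then have e2: "pairing (xt ts) (L \<gamma>) = of_int (m + mb)" using e mb by simp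
    obtain j where j: "j < l" "ts = TT (ps ! j)" "ps ! j = (L \<gamma>, m + mb) \<or> ps ! j = (- L \<gamma>, - (m + mb))"
      using F1'[OF ts01 LgP e2] by blast
    have "j = a" using TT_inj[OF j(1) a] j(2) ts_def pa by simp
    then show ?thesis using j(3) pa mb by auto
  qed
  have S3: "\<gamma>1 = \<gamma>2" if g1: "\<gamma>1 \<in> P" and g2: "\<gamma>2 \<in> P" and e1: "pairing z \<gamma>1 = of_int m1"
      and e2: "pairing z \<gamma>2 = of_int m2" for \<gamma>1 \<gamma>2 m1 m2
  proof -
    have g1P: "\<gamma>1 \<in> \<Phi>" and g2P: "\<gamma>2 \<in> \<Phi>" using g1 g2 pos_sub by auto
    have iL: "iso L" using conjunct1[OF wprod_affine[OF w]] L_def by (simp add: goodLb_def)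
    have injL: "inj L" using iso_inj[OF iL] .
    have linL: "linear L" using iL by (simp add: iso_def)
    have "L \<gamma>1 = L \<gamma>2 \<or> L \<gamma>1 = - L \<gamma>2" using S2[OF g1P e1] S2[OF g2P e2] by auto
    then have "\<gamma>1 = \<gamma>2 \<or> \<gamma>1 = - \<gamma>2"
    proof
      assume "L \<gamma>1 = L \<gamma>2" then show ?thesis using injL by (simp add: inj_def)
    next
      assume "L \<gamma>1 = - L \<gamma>2" then have "L \<gamma>1 = L (- \<gamma>2)" using linL by (simp add: linear_neg)
      then show ?thesis using injL by (simp add: inj_def)
    qed
    then show ?thesis using not_both[OF g2] g1 by auto
  qed
  have S4: "\<exists>i\<in>{0..r}. pairing z (gam i) = of_int (kk i)"
  proof -
    obtain \<gamma> where g: "\<gamma> \<in> \<Phi>" "L \<gamma> = \<beta>a"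
      using goodLb_surj[OF conjunct1[OF wprod_affine[OF w]] baP] L_def by blast
    obtain mb :: int where mb: "pairing c \<beta>a = of_int mb" using wprod0_int[OF w baP] c_def by (blast elim: Ints_obtain)
    have "pairing (xt ts) \<beta>a = pairing z \<gamma> + pairing c \<beta>a"
      using pairing_wprod[OF w, of z \<gamma>] uz L_def c_def g(2) by simp
    then have ez: "pairing z \<gamma> = of_int (ka - mb)" using Rp(5) ts_def mb by simp
    obtain \<gamma>0 m0 where g0: "\<gamma>0 \<in> P" "pairing z \<gamma>0 = of_int m0"
    proof (cases "\<gamma> \<in> P")
      case True then show ?thesis using that ez by blast
    next
      case False then have "- \<gamma> \<in> P" using pos_or_neg[OF g(1)] by blast
      moreover have "pairing z (- \<gamma>) = of_int (mb - ka)" using ez by (simp add: pairing_uminus2)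
      ultimately show ?thesis using that by blast
    qed
    have g0P: "\<gamma>0 \<in> \<Phi>" using g0 pos_sub by auto
    have "0 \<le> (of_int m0 :: real) \<and> (of_int m0 :: real) \<le> 1" using S1[OF g0(1)] g0(2) by simp
    then have "m0 = 0 \<or> m0 = 1" by auto
    have nnz: "0 \<le> pairing z (\<alpha> j)" if "j \<in> {1..r}" for j using S1[OF alpha_pos[OF that]] by simp
    have cg: "0 \<le> co \<gamma>0 j" if "j \<in> {1..r}" for j using pos_iff[OF g0P] g0(1) that by blast
    from \<open>m0 = 0 \<or> m0 = 1\<close> show ?thesis
    proof
      assume m0: "m0 = 0"
      obtain j where j: "j \<in> {1..r}" "co \<gamma>0 j \<noteq> 0" using co_nz[OF nz[OF g0P]] by blast
      have sz: "(\<Sum>j=1..r. co \<gamma>0 j * pairing z (\<alpha> j)) = 0" using g0(2) m0 pairing_expand_co[of z \<gamma>0] by simp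
      have "\<forall>j\<in>{1..r}. co \<gamma>0 j * pairing z (\<alpha> j) = 0"
        using sum_nonneg_eq_0_iff[of "{1..r}" "\<lambda>j. co \<gamma>0 j * pairing z (\<alpha> j)"] sz cg nnz by simp
      then have "co \<gamma>0 j * pairing z (\<alpha> j) = 0" using j(1) by blast
      then have "pairing z (\<alpha> j) = 0" using j(2) by simp
      then have "pairing z (gam j) = of_int (kk j)" using j by (simp add: gam_def kk_def)
      then show ?thesis using j by auto
    next
      assume m0: "m0 = 1"
      have "pairing z \<gamma>0 = (\<Sum>j=1..r. co \<gamma>0 j * pairing z (\<alpha> j))" by (rule pairing_expand_co)
      also have "\<dots> \<le> (\<Sum>j=1..r. co \<theta> j * pairing z (\<alpha> j))"
      proof (rule sum_mono)
        fix j assume j: "j \<in> {1..r}"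
        show "co \<gamma>0 j * pairing z (\<alpha> j) \<le> co \<theta> j * pairing z (\<alpha> j)"
          using theta_high[OF g0(1) j] nnz[OF j] by (rule mult_right_mono)
      qed
      also have "\<dots> = pairing z \<theta>" by (rule pairing_expand_co[symmetric])
      finally have "1 \<le> pairing z \<theta>" using g0(2) m0 by simp
      then have "pairing z \<theta> = 1" using S1[OF theta_pos] by simp
      then have "pairing z (gam 0) = of_int (kk 0)" by (simp add: gam_def kk_def)
      then show ?thesis by auto
    qed
  qed
  then obtain i where i: "i \<in> {0..r}" and zi: "pairing z (gam i) = of_int (kk i)" by blast
  have iL: "iso L" using conjunct1[OF wprod_affine[OF w]] L_def by (simp add: goodLb_def)
  have affw: "\<forall>y. wprod \<alpha> \<theta> w y = L y + c" unfolding L_def c_def using conjunct2[OF wprod_affine[OF w]] .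
  have S5: "wprod \<alpha> \<theta> w \<circ> sgen \<alpha> \<theta> i = saff \<beta>a (of_int ka) \<circ> wprod \<alpha> \<theta> w"
  proof
    fix y
    have cj: "wprod \<alpha> \<theta> w (saff (gam i) (of_int (kk i)) y) = saff (L (gam i)) (of_int (kk i) + pairing c (L (gam i))) (wprod \<alpha> \<theta> w y)"
      using iso_conj[OF iL affw[rule_format] gam_nz[OF i]] .
    have gP: "gam i \<in> \<Phi>" using gam_pos[OF i] pos_sub by auto
    from S2[OF gP zi]
    have "saff (L (gam i)) (of_int (kk i) + pairing c (L (gam i))) = saff \<beta>a (of_int ka)"
      using saff_neg[of \<beta>a "of_int ka"] by auto
    then show "(wprod \<alpha> \<theta> w \<circ> sgen \<alpha> \<theta> i) y = (saff \<beta>a (of_int ka) \<circ> wprod \<alpha> \<theta> w) y"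
      using cj sgen_wall[OF i] by simp
  qed
  have S6: "wbarprod \<alpha> \<theta> w (root_idx \<alpha> \<theta> i) = bmap (\<beta>a, ka)"
  proof -
    let ?\<rho> = "root_idx \<alpha> \<theta> i"
    have rP: "?\<rho> \<in> \<Phi>" using root_idx_in[OF i] .
    have zr: "pairing z ?\<rho> = of_int (cc i)" using ridx_gam[of i] zi by (auto simp: pairing_uminus2)
    define s where "s = (tau a + ts) / 2"
    have s: "tau a < s" "s < ts" using lt by (auto simp: s_def)
    have yA: "f s \<in> A" using inA[OF s] .
    have us: "wprod \<alpha> \<theta> w (f s) = xt s" unfolding f_def using wprod_inv_rev[OF w] by simp
    have pr: "pairing (xt s) (L ?\<rho>) = pairing (f s) ?\<rho> + pairing c (L ?\<rho>)"
      using pairing_wprod[OF w, of "f s" ?\<rho>] us L_def c_def by simp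
    have pos: "pairing (f s) ?\<rho> > of_int (cc i)" using ridx_pos[OF yA i] .
    have n0: "pairing lam \<beta>a \<noteq> 0" using Rp(2) .
    have xs: "pairing (xt s) \<beta>a - of_int ka = (ts - s) * pairing lam \<beta>a"
    proof -
      have "pairing (xt ts) \<beta>a = of_int ka" using Rp(5) ts_def by simp
      then show ?thesis by (simp add: pairing_xt algebra_simps)
    qed
    have tsp: "ts - s > 0" using s by simp
    from S2[OF rP zr] show ?thesis
    proof
      assume h: "L ?\<rho> = \<beta>a \<and> of_int (cc i) + pairing c (L ?\<rho>) = of_int ka"
      have e1: "of_int ka = of_int (cc i) + pairing c \<beta>a" using conjunct1[OF h] conjunct2[OF h] by simp
      have "pairing (xt s) \<beta>a = pairing (f s) ?\<rho> + pairing c \<beta>a" using pr h by simp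
      then have "pairing (xt s) \<beta>a - of_int ka > 0" using e1 pos by linarith
      then have "pairing lam \<beta>a > 0" using xs tsp by (simp add: zero_less_mult_iff)
      then have "ka \<le> 0" using Rp(6) by simp
      then show ?thesis using h L_def by (simp add: bmap_def)
    next
      assume h: "L ?\<rho> = - \<beta>a \<and> of_int (cc i) + pairing c (L ?\<rho>) = - of_int ka"
      have e1: "- of_int ka = of_int (cc i) + pairing c (- \<beta>a)" using conjunct1[OF h] conjunct2[OF h] by simp
      have "pairing (xt s) (- \<beta>a) = pairing (f s) ?\<rho> + pairing c (- \<beta>a)" using pr h by simp
      then have "pairing (xt s) (- \<beta>a) + of_int ka > 0" using e1 pos by linarith
      then have "pairing (xt s) \<beta>a - of_int ka < 0" by (simp add: pairing_uminus2)
      then have "pairing lam \<beta>a < 0" using xs tsp by (simp add: mult_less_0_iff)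
      then have "\<not> ka \<le> 0" using Rp(6) by simp
      then show ?thesis using h L_def by (simp add: bmap_def)
    qed
  qed
  have S7: "sgen \<alpha> \<theta> i (f t) \<in> A" if t: "ts < t" "t < tau (Suc (Suc a))" for t
    unfolding fund_alcove_def
  proof (intro CollectI ballI)
    fix \<beta> assume b: "\<beta> \<in> P"
    define g where "g = gam i"
    define q where "q = pairing g \<beta>"
    define Cb where "Cb = pairing (f 0) \<beta>"
    define Db where "Db = - pairing (L' lam) \<beta>"
    define Cg where "Cg = pairing (f 0) g"
    define Dg where "Dg = - pairing (L' lam) g"
    have ps: "pairing (sgen \<alpha> \<theta> i (f s)) \<beta> = (Cb - (Cg - of_int (kk i)) * q) + s * (Db - Dg * q)" for s
    proof -
      have "pairing (sgen \<alpha> \<theta> i (f s)) \<beta> = pairing (f s) \<beta> - (pairing (f s) g - of_int (kk i)) * q"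
        using sgen_wall[OF i] by (simp add: g_def q_def saff_apply pairing_diff pairing_scale)
      also have "\<dots> = (Cb - (Cg - of_int (kk i)) * q) + s * (Db - Dg * q)"
      proof -
        have e1: "pairing (f s) \<beta> = Cb + s * Db" using f_aff[of s \<beta>] by (simp add: Cb_def Db_def)
        have e2: "pairing (f s) g = Cg + s * Dg" using f_aff[of s g] by (simp add: Cg_def Dg_def)
        show ?thesis unfolding e1 e2 by (simp add: algebra_simps)
      qed
      finally show ?thesis .
    qed
    have ni: "\<forall>s. ts < s \<and> s < tau (Suc (Suc a)) \<longrightarrow>
        (Cb - (Cg - of_int (kk i)) * q) + s * (Db - Dg * q) \<noteq> 0 \<and> (Cb - (Cg - of_int (kk i)) * q) + s * (Db - Dg * q) \<noteq> 1"
    proof (intro allI impI)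
      fix s assume s: "ts < s \<and> s < tau (Suc (Suc a))"
      have wi: "set (w @ [i]) \<subseteq> {0..r}" using w i by simp
      have eq: "sgen \<alpha> \<theta> i (f s) = wprod \<alpha> \<theta> (rev (w @ [i])) (xt s)" by (simp add: f_def wprod_Cons)
      have nh: "\<And>\<gamma> m. \<gamma> \<in> \<Phi> \<Longrightarrow> pairing (xt s) \<gamma> \<noteq> of_int m"
        using nohyp[of "Suc a" s] a s ts_tau by simp
      have bP: "\<beta> \<in> \<Phi>" using b pos_sub by auto
      have "pairing (sgen \<alpha> \<theta> i (f s)) \<beta> \<noteq> of_int k" for k
      proof
        assume "pairing (sgen \<alpha> \<theta> i (f s)) \<beta> = of_int k"
        then have "pairing (wprod \<alpha> \<theta> (rev (w @ [i])) (xt s)) \<beta> = of_int k" using eq by simp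
        then obtain \<gamma> m where "\<gamma> \<in> \<Phi>" "pairing (xt s) \<gamma> = of_int m" using G_inv[OF wi bP] by blast
        then show False using nh by blast
      qed
      from this[of 0] this[of 1] show "(Cb - (Cg - of_int (kk i)) * q) + s * (Db - Dg * q) \<noteq> 0 \<and> (Cb - (Cg - of_int (kk i)) * q) + s * (Db - Dg * q) \<noteq> 1"
        using ps[of s] by simp
    qed
    have start: "(0 < (Cb - (Cg - of_int (kk i)) * q) + ts * (Db - Dg * q) \<and> (Cb - (Cg - of_int (kk i)) * q) + ts * (Db - Dg * q) < 1) \<or>
       ((Cb - (Cg - of_int (kk i)) * q) + ts * (Db - Dg * q) = 0 \<and> Db - Dg * q > 0) \<or>
       ((Cb - (Cg - of_int (kk i)) * q) + ts * (Db - Dg * q) = 1 \<and> Db - Dg * q < 0)"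
    proof -
      have v0: "(Cb - (Cg - of_int (kk i)) * q) + ts * (Db - Dg * q) = pairing z \<beta>"
      proof -
        have "sgen \<alpha> \<theta> i z = z" using sgen_wall[OF i] saff_fix[OF zi] by simp
        then show ?thesis using ps[of ts] z_def by simp
      qed
      show ?thesis
      proof (cases "\<beta> = g")
        case False
        have "pairing z \<beta> \<noteq> 0"
        proof
          assume "pairing z \<beta> = 0"
          then have "\<beta> = gam i" using S3[OF b gam_pos[OF i], of 0 "kk i"] zi by simp
          then show False using False g_def by simp
        qed
        moreover have "pairing z \<beta> \<noteq> 1"
        proof
          assume "pairing z \<beta> = 1"
          then have "\<beta> = gam i" using S3[OF b gam_pos[OF i], of 1 "kk i"] zi by simp
          then show False using False g_def by simp
        qed
        ultimately show ?thesis using S1[OF b] v0 by simp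
      next
        case True
        have gnz: "g \<noteq> 0" using gam_nz[OF i] g_def by simp
        have q2: "q = 2" using True gnz by (simp add: q_def pairing_self)
        have zg: "Cg + ts * Dg = of_int (kk i)" using zi f_aff[of ts g] z_def g_def by (simp add: Cg_def Dg_def)
        define s where "s = (tau a + ts) / 2"
        have s: "tau a < s" "s < ts" using lt by (auto simp: s_def)
        have fs: "0 < Cg + s * Dg \<and> Cg + s * Dg < 1"
          using A_pair[OF inA[OF s] gam_pos[OF i]] f_aff[of s g] g_def by (simp add: Cg_def Dg_def)
        have Cb_eq: "Cb = Cg" "Db = Dg" using True by (simp_all add: Cb_def Cg_def Db_def Dg_def)
        have kk01: "kk i = 0 \<or> kk i = 1" by (simp add: kk_def)
        have val: "(Cb - (Cg - of_int (kk i)) * q) + ts * (Db - Dg * q) = of_int (kk i)"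
          using zg q2 Cb_eq by (simp add: algebra_simps)
        have sl: "Db - Dg * q = - Dg" using q2 Cb_eq by simp
        from kk01 show ?thesis
        proof
          assume k0: "kk i = 0"
          have "(s - ts) * Dg > 0" using fs zg k0 by (simp add: algebra_simps)
          then have "Dg < 0" using s by (simp add: zero_less_mult_iff)
          then show ?thesis using val sl k0 by simp
        next
          assume k1: "kk i = 1"
          have "(s - ts) * Dg < 0" using fs zg k1 by (simp add: algebra_simps)
          then have "Dg > 0" using s by (simp add: mult_less_0_iff)
          then show ?thesis using val sl k1 by simp
        qed
      qed
    qed
    obtain s0 where s0: "ts < s0" "s0 < tau (Suc (Suc a))"
      "0 < (Cb - (Cg - of_int (kk i)) * q) + s0 * (Db - Dg * q)" "(Cb - (Cg - of_int (kk i)) * q) + s0 * (Db - Dg * q) < 1"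
      using aff_start[OF lt2 start] by blast
    have "0 < (Cb - (Cg - of_int (kk i)) * q) + t * (Db - Dg * q) \<and> (Cb - (Cg - of_int (kk i)) * q) + t * (Db - Dg * q) < 1"
      using aff_stay[OF s0 ni t] .
    then show "0 < pairing (sgen \<alpha> \<theta> i (f t)) \<beta> \<and> pairing (sgen \<alpha> \<theta> i (f t)) \<beta> < 1" using ps[of t] by simp
  qed
  show ?thesis
    using i S5 S6 S7 pa ts_tau f_def by auto
qed

end



context PATH begin

definition CH :: "nat list \<Rightarrow> nat \<Rightarrow> bool" where
  "CH w j \<longleftrightarrow> wprod \<alpha> \<theta> (take j w) \<circ> sgen \<alpha> \<theta> (w ! j) = saff (fst (ps ! j)) (of_int (snd (ps ! j))) \<circ> wprod \<alpha> \<theta> (take j w) \<and>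
     wbarprod \<alpha> \<theta> (take j w) (root_idx \<alpha> \<theta> (w ! j)) = bmap (ps ! j)"

lemma f_affine:
  assumes w: "set w \<subseteq> {0..r}"
  shows "\<exists>C D. \<forall>t. pairing (wprod \<alpha> \<theta> w (xt t)) \<beta> = C + t * D"
proof -
  have aff: "goodLb (wbarprod \<alpha> \<theta> w) (wprod \<alpha> \<theta> w 0)"
    "\<forall>y. wprod \<alpha> \<theta> w y = wbarprod \<alpha> \<theta> w y + wprod \<alpha> \<theta> w 0" using wprod_affine[OF w] by blast+
  have lin: "linear (wbarprod \<alpha> \<theta> w)" using aff(1) by (simp add: goodLb_def iso_def)
  have "pairing (wprod \<alpha> \<theta> w (xt t)) \<beta> = pairing (wbarprod \<alpha> \<theta> w p + wprod \<alpha> \<theta> w 0) \<beta> + t * (- pairing (wbarprod \<alpha> \<theta> w lam) \<beta>)" for t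
  proof -
    have "wprod \<alpha> \<theta> w (xt t) = wbarprod \<alpha> \<theta> w p - t *\<^sub>R wbarprod \<alpha> \<theta> w lam + wprod \<alpha> \<theta> w 0"
      unfolding xt_def using aff(2)[rule_format, of "p - t *\<^sub>R lam"] lin by (simp add: linear_diff linear_scale)
    then show ?thesis by (simp add: pairing_add pairing_diff pairing_scale)
  qed
  then show ?thesis by blast
qed

lemma path:
  "a \<le> l \<Longrightarrow> \<exists>w. length w = a \<and> set w \<subseteq> {0..r} \<and> (\<forall>j<a. CH w j) \<and>
      (\<forall>t. tau a < t \<and> t < tau (Suc a) \<longrightarrow> wprod \<alpha> \<theta> (rev w) (xt t) \<in> A)"
proof (induction a)
  case 0
  have "xt t \<in> A" if t: "tau 0 < t" "t < tau (Suc 0)" for t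
    unfolding fund_alcove_def
  proof (intro CollectI ballI)
    fix \<beta> assume b: "\<beta> \<in> P"
    let ?C = "pairing p \<beta>" and ?D = "- pairing lam \<beta>"
    have e: "pairing (xt s) \<beta> = ?C + s * ?D" for s by (simp add: pairing_xt)
    have lt: "tau 0 < tau (Suc 0)" using tau_mono[of 0 "Suc 0"] by simp
    have t0: "tau 0 = 0" by (simp add: tau_def)
    have st: "(0 < ?C + tau 0 * ?D \<and> ?C + tau 0 * ?D < 1) \<or> (?C + tau 0 * ?D = 0 \<and> ?D > 0) \<or> (?C + tau 0 * ?D = 1 \<and> ?D < 0)"
      using A_pair[OF pA b] t0 by simp
    obtain s0 where s0: "tau 0 < s0" "s0 < tau (Suc 0)" "0 < ?C + s0 * ?D" "?C + s0 * ?D < 1"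
      using aff_start[OF lt st] by blast
    have ni: "\<forall>s. tau 0 < s \<and> s < tau (Suc 0) \<longrightarrow> ?C + s * ?D \<noteq> 0 \<and> ?C + s * ?D \<noteq> 1"
    proof (intro allI impI)
      fix s assume s: "tau 0 < s \<and> s < tau (Suc 0)"
      have bP: "\<beta> \<in> \<Phi>" using b pos_sub by auto
      have "pairing (xt s) \<beta> \<noteq> of_int 0" using nohyp[of 0 s \<beta> 0] s bP by simp
      moreover have "pairing (xt s) \<beta> \<noteq> of_int 1" using nohyp[of 0 s \<beta> 1] s bP by simp
      ultimately have "pairing (xt s) \<beta> \<noteq> 0" "pairing (xt s) \<beta> \<noteq> 1" by simp_all
      then show "?C + s * ?D \<noteq> 0 \<and> ?C + s * ?D \<noteq> 1" using e[of s] by simp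
    qed
    show "0 < pairing (xt t) \<beta> \<and> pairing (xt t) \<beta> < 1" using aff_stay[OF s0 ni t] e[of t] by simp
  qed
  then show ?case by (intro exI[of _ "[]"]) simp
next
  case (Suc a)
  then have a: "a < l" by simp
  obtain w where w: "length w = a" "set w \<subseteq> {0..r}" "\<forall>j<a. CH w j"
    "\<forall>t. tau a < t \<and> t < tau (Suc a) \<longrightarrow> wprod \<alpha> \<theta> (rev w) (xt t) \<in> A"
    using Suc.IH a by auto
  obtain i where i: "i \<in> {0..r}"
    "wprod \<alpha> \<theta> w \<circ> sgen \<alpha> \<theta> i = saff (fst (ps ! a)) (of_int (snd (ps ! a))) \<circ> wprod \<alpha> \<theta> w"
    "wbarprod \<alpha> \<theta> w (root_idx \<alpha> \<theta> i) = bmap (ps ! a)"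
    "\<forall>t. tau (Suc a) < t \<and> t < tau (Suc (Suc a)) \<longrightarrow> sgen \<alpha> \<theta> i (wprod \<alpha> \<theta> (rev w) (xt t)) \<in> A"
    using step[OF a w(2) w(4)] by blast
  have ch: "\<forall>j<Suc a. CH (w @ [i]) j"
  proof (intro allI impI)
    fix j assume j: "j < Suc a"
    show "CH (w @ [i]) j"
    proof (cases "j < a")
      case True
      have "take j (w @ [i]) = take j w" "(w @ [i]) ! j = w ! j" using True w(1) by (simp_all add: nth_append)
      then show ?thesis using w(3) True by (simp add: CH_def)
    next
      case False
      then have "j = a" using j by simp
      then have "take j (w @ [i]) = w" "(w @ [i]) ! j = i" using w(1) by (simp_all add: nth_append)
      then show ?thesis using i(2,3) \<open>j = a\<close> by (simp add: CH_def)
    qed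
  qed
  have inv: "\<forall>t. tau (Suc a) < t \<and> t < tau (Suc (Suc a)) \<longrightarrow> wprod \<alpha> \<theta> (rev (w @ [i])) (xt t) \<in> A"
    using i(4) by (simp add: wprod_Cons)
  show ?case
    using ch inv w(1,2) i(1) by (intro exI[of _ "w @ [i]"]) simp
qed

lemma path_final:
  "\<exists>w. length w = l \<and> set w \<subseteq> {0..r} \<and> (\<forall>j<l. CH w j) \<and> wprod \<alpha> \<theta> (rev w) (p - lam) \<in> A"
proof -
  obtain w where w: "length w = l" "set w \<subseteq> {0..r}" "\<forall>j<l. CH w j"
    "\<forall>t. tau l < t \<and> t < tau (Suc l) \<longrightarrow> wprod \<alpha> \<theta> (rev w) (xt t) \<in> A"
    using path[of l] by auto
  have rw: "set (rev w) \<subseteq> {0..r}" using w(2) by simp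
  have lt: "tau l < 1" using tau_mono[of l "Suc l"] by (simp add: tau_def)
  have "wprod \<alpha> \<theta> (rev w) (xt 1) \<in> A"
    unfolding fund_alcove_def
  proof (intro CollectI ballI)
    fix \<beta> assume b: "\<beta> \<in> P"
    have bP: "\<beta> \<in> \<Phi>" using b pos_sub by auto
    obtain C D where CD: "\<forall>t. pairing (wprod \<alpha> \<theta> (rev w) (xt t)) \<beta> = C + t * D" using f_affine[OF rw] by blast
    have t1: "tau (Suc l) = 1" by (simp add: tau_def)
    have "\<forall>s. tau l < s \<and> s < 1 \<longrightarrow> 0 < C + s * D \<and> C + s * D < 1"
      using w(4) t1 A_pair[OF _ b] CD by metis
    then have cl: "0 \<le> C + 1 * D \<and> C + 1 * D \<le> 1" using aff_close(1)[OF lt] by blast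
    have n: "pairing (wprod \<alpha> \<theta> (rev w) (xt 1)) \<beta> \<noteq> of_int k" for k
    proof
      assume "pairing (wprod \<alpha> \<theta> (rev w) (xt 1)) \<beta> = of_int k"
      then obtain \<gamma> m where "\<gamma> \<in> \<Phi>" "pairing (xt 1) \<gamma> = of_int m" using G_inv[OF w(2) bP] by blast
      then show False using nohyp1 by blast
    qed
    show "0 < pairing (wprod \<alpha> \<theta> (rev w) (xt 1)) \<beta> \<and> pairing (wprod \<alpha> \<theta> (rev w) (xt 1)) \<beta> < 1"
      using cl n[of 0] n[of 1] CD by auto
  qed
  then show ?thesis using w by (auto simp: xt_def)
qed

end



definition peval :: "real list \<Rightarrow> real \<Rightarrow> real" where
  "peval xs e = (\<Sum>i<length xs. xs ! i * e ^ i)"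

lemma peval_Nil[simp]: "peval [] e = 0" by (simp add: peval_def)

lemma peval_Cons: "peval (a # xs) e = a + e * peval xs e"
proof -
  have "peval (a # xs) e = (\<Sum>i<Suc (length xs). (a # xs) ! i * e ^ i)" by (simp add: peval_def)
  also have "\<dots> = a + (\<Sum>i<length xs. (a # xs) ! Suc i * e ^ Suc i)"
    by (subst sum.lessThan_Suc_shift) simp
  also have "\<dots> = a + e * peval xs e"
    by (simp add: peval_def sum_distrib_left algebra_simps)
  finally show ?thesis .
qed

lemma peval_tendsto: "((\<lambda>e. peval xs e) \<longlongrightarrow> peval xs 0) (at_right 0)"
  unfolding peval_def by (intro tendsto_intros)

lemma lex_eventually:
  "length xs = length ys \<Longrightarrow> (xs, ys) \<in> lexord {(x, y). x < y} \<Longrightarrow>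
     eventually (\<lambda>e. peval xs e < peval ys e) (at_right (0::real))"
proof (induction xs arbitrary: ys)
  case Nil
  then show ?case by simp
next
  case (Cons a xs)
  then obtain b ys' where ys: "ys = b # ys'" by (cases ys) auto
  have len: "length xs = length ys'" using Cons.prems ys by simp
  have lx: "a < b \<or> (a = b \<and> (xs, ys') \<in> lexord {(x, y). x < y})" using Cons.prems(2) ys by simp
  then show ?case
  proof
    assume ab: "a < b"
    have t: "((\<lambda>e. (b + e * peval ys' e) - (a + e * peval xs e)) \<longlongrightarrow> (b + 0 * peval ys' 0) - (a + 0 * peval xs 0)) (at_right 0)"
      by (intro tendsto_intros peval_tendsto)
    have "eventually (\<lambda>e. 0 < (b + e * peval ys' e) - (a + e * peval xs e)) (at_right (0::real))"
      using order_tendstoD(1)[OF t, of 0] ab by simp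
    then show ?thesis unfolding ys by (rule eventually_mono) (simp add: peval_Cons)
  next
    assume h: "a = b \<and> (xs, ys') \<in> lexord {(x, y). x < y}"
    have e1: "eventually (\<lambda>e. peval xs e < peval ys' e) (at_right (0::real))" using Cons.IH[OF len] h by simp
    have e2: "eventually (\<lambda>e. 0 < e) (at_right (0::real))" by (rule eventually_at_right_less)
    show ?thesis unfolding ys using eventually_conj[OF e1 e2]
      by (rule eventually_mono) (simp add: peval_Cons h)
  qed
qed

lemma sorted_wrt_distinct: "sorted_wrt R xs \<Longrightarrow> (\<And>x. \<not> R x x) \<Longrightarrow> distinct xs"
  by (induction xs) auto

lemma peval_map_upt: "peval (map f [Suc 0..<Suc n]) e = (\<Sum>i<n. f (Suc i) * e ^ i)"
  unfolding peval_def by (intro sum.cong) (simp_all del: upt_Suc add: nth_map)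

context RS begin

lemma hmap_eq:
  "hmap \<omega> r lam (\<beta>, k) = map (\<lambda>x. x / pairing lam \<beta>) (- real_of_int k # map (\<lambda>i. co \<beta> i) [1..<Suc r])"
  by (simp add: hmap_def co_def)

lemma hmap_len: "length (hmap \<omega> r lam h) = Suc r"
  by (cases h) (simp add: hmap_def)

lemma hmap_nth0: "hmap \<omega> r lam (\<beta>, k) ! 0 = - of_int k / pairing lam \<beta>"
  by (simp add: hmap_eq)

lemma hmap_nthS: "i < r \<Longrightarrow> hmap \<omega> r lam (\<beta>, k) ! Suc i = co \<beta> (Suc i) / pairing lam \<beta>"
  by (simp add: hmap_eq nth_map del: upt_Suc)

lemma peval_hmap:
  "peval (hmap \<omega> r lam (\<beta>, k)) e = (- of_int k + e * (\<Sum>i<r. co \<beta> (Suc i) * e ^ i)) / pairing lam \<beta>"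
proof -
  have "peval (hmap \<omega> r lam (\<beta>, k)) e = - of_int k / pairing lam \<beta> + e * (\<Sum>i<r. co \<beta> (Suc i) / pairing lam \<beta> * e ^ i)"
    using peval_map_upt[of "\<lambda>i. co \<beta> i / pairing lam \<beta>" r e]
    by (simp add: hmap_eq peval_Cons comp_def del: upt_Suc)
  also have "\<dots> = (- of_int k + e * (\<Sum>i<r. co \<beta> (Suc i) * e ^ i)) / pairing lam \<beta>"
    by (cases "pairing lam \<beta> = 0") (simp_all add: sum_divide_distrib[symmetric] field_simps)
  finally show ?thesis .
qed

lemma R_sub: "R_pairs \<Phi> \<alpha> r lam \<subseteq> P \<times> UNIV"
  by (auto simp: R_pairs_def)

lemma R_nz: "(\<beta>, k) \<in> R_pairs \<Phi> \<alpha> r lam \<Longrightarrow> pairing lam \<beta> \<noteq> 0"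
  by (auto simp: R_pairs_def)

lemma hmap_inj: "inj_on (hmap \<omega> r lam) (R_pairs \<Phi> \<alpha> r lam)"
proof (rule inj_onI)
  fix h1 h2 assume h1: "h1 \<in> R_pairs \<Phi> \<alpha> r lam" and h2: "h2 \<in> R_pairs \<Phi> \<alpha> r lam"
    and e: "hmap \<omega> r lam h1 = hmap \<omega> r lam h2"
  obtain \<beta>1 k1 where h1e: "h1 = (\<beta>1, k1)" by (cases h1)
  obtain \<beta>2 k2 where h2e: "h2 = (\<beta>2, k2)" by (cases h2)
  have b1: "\<beta>1 \<in> P" and b2: "\<beta>2 \<in> P" using h1 h2 h1e h2e by (auto simp: R_pairs_def)
  define n1 where "n1 = pairing lam \<beta>1"
  define n2 where "n2 = pairing lam \<beta>2"
  have n1: "n1 \<noteq> 0" and n2: "n2 \<noteq> 0" using R_nz h1 h2 h1e h2e n1_def n2_def by auto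
  have c: "co \<beta>1 j / n1 = co \<beta>2 j / n2" if j: "j \<in> {1..r}" for j
  proof -
    obtain i where i: "j = Suc i" "i < r" using j by (cases j) auto
    show ?thesis using arg_cong[OF e, of "\<lambda>xs. xs ! Suc i"] hmap_nthS[OF i(2)] i h1e h2e n1_def n2_def by simp
  qed
  have "coroot \<beta>1 = (\<Sum>j=1..r. co \<beta>1 j *\<^sub>R coroot (\<alpha> j))" by (rule coroot_expand)
  also have "\<dots> = (\<Sum>j=1..r. (n1 / n2) *\<^sub>R (co \<beta>2 j *\<^sub>R coroot (\<alpha> j)))"
  proof (rule sum.cong)
    fix j assume j: "j \<in> {1..r}"
    have "co \<beta>1 j = (n1 / n2) * co \<beta>2 j" using c[OF j] n1 n2 by (simp add: field_simps)
    then show "co \<beta>1 j *\<^sub>R coroot (\<alpha> j) = (n1 / n2) *\<^sub>R (co \<beta>2 j *\<^sub>R coroot (\<alpha> j))" by simp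
  qed simp
  also have "\<dots> = (n1 / n2) *\<^sub>R (\<Sum>j=1..r. co \<beta>2 j *\<^sub>R coroot (\<alpha> j))" by (rule scaleR_sum_right[symmetric])
  also have "\<dots> = (n1 / n2) *\<^sub>R coroot \<beta>2" using coroot_expand[of \<beta>2] by simp
  finally have cr: "coroot \<beta>1 = (n1 / n2) *\<^sub>R coroot \<beta>2" .
  have b1P: "\<beta>1 \<in> \<Phi>" and b2P: "\<beta>2 \<in> \<Phi>" using b1 b2 pos_sub by auto
  have q: "n1 / n2 \<noteq> 0" using n1 n2 by simp
  have "\<beta>1 = coroot (coroot \<beta>1)" using coroot_coroot[OF nz[OF b1P]] by simp
  also have "\<dots> = (1 / (n1 / n2)) *\<^sub>R \<beta>2" using cr coroot_scale[OF q, of "coroot \<beta>2"] coroot_coroot[OF nz[OF b2P]] by simp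
  finally have "\<beta>1 = \<beta>2" using pos_par[OF b1 b2] by blast
  then have "n1 = n2" using n1_def n2_def by simp
  moreover have "- of_int k1 / n1 = - of_int k2 / n2"
    using arg_cong[OF e, of "\<lambda>xs. xs ! 0"] h1e h2e hmap_nth0 n1_def n2_def \<open>\<beta>1 = \<beta>2\<close> by simp
  ultimately have "k1 = k2" using n1 by simp
  then show "h1 = h2" using h1e h2e \<open>\<beta>1 = \<beta>2\<close> by simp
qed

lemma R_finite: "finite (R_pairs \<Phi> \<alpha> r lam)"
proof -
  define N where "N \<beta> = \<lceil>\<bar>pairing lam \<beta>\<bar>\<rceil>" for \<beta>
  have "R_pairs \<Phi> \<alpha> r lam \<subseteq> Sigma \<Phi> (\<lambda>\<beta>. {- N \<beta>..N \<beta>})"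
  proof
    fix h assume h: "h \<in> R_pairs \<Phi> \<alpha> r lam"
    obtain \<beta> k where he: "h = (\<beta>, k)" by (cases h)
    have b: "\<beta> \<in> \<Phi>" using h he pos_sub by (auto simp: R_pairs_def)
    have kb: "of_int k \<le> \<bar>pairing lam \<beta>\<bar> \<and> - of_int k \<le> \<bar>pairing lam \<beta>\<bar>" using h he by (auto simp: R_pairs_def)
    have c: "\<bar>pairing lam \<beta>\<bar> \<le> of_int (N \<beta>)" unfolding N_def by (rule le_of_int_ceiling)
    have "of_int k \<le> (of_int (N \<beta>) :: real)" "of_int (- k) \<le> (of_int (N \<beta>) :: real)" using kb c by auto
    then have "k \<le> N \<beta>" "- k \<le> N \<beta>" by (simp_all only: of_int_le_iff)
    then have "k \<in> {- N \<beta>..N \<beta>}" by simp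
    then show "h \<in> Sigma \<Phi> (\<lambda>\<beta>. {- N \<beta>..N \<beta>})" using b he by simp
  qed
  moreover have "finite (Sigma \<Phi> (\<lambda>\<beta>. {- N \<beta>..N \<beta>}))" using finPhi by (intro finite_SigmaI) auto
  ultimately show ?thesis using finite_subset by blast
qed

end



context RS begin

lemma exists_p:
  assumes wl: "lam \<in> weight_lattice \<Phi>"
  shows "\<exists>p\<in>A. \<forall>h1\<in>R_pairs \<Phi> \<alpha> r lam. \<forall>h2\<in>R_pairs \<Phi> \<alpha> r lam.
     lex_less (hmap \<omega> r lam h1) (hmap \<omega> r lam h2) \<longrightarrow>
       (pairing p (fst h1) - of_int (snd h1)) / pairing lam (fst h1) < (pairing p (fst h2) - of_int (snd h2)) / pairing lam (fst h2)"
proof -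
  define pe where "pe e = (\<Sum>i<r. (e ^ Suc i) *\<^sub>R \<omega> (Suc i))" for e :: real
  have ppe: "pairing (pe e) \<beta> = e * (\<Sum>i<r. co \<beta> (Suc i) * e ^ i)" for e \<beta>
  proof -
    have "pairing (pe e) \<beta> = (\<Sum>i<r. e ^ Suc i * co \<beta> (Suc i))"
      by (simp add: pe_def pairing_def inner_sum_left co_def)
    also have "\<dots> = e * (\<Sum>i<r. co \<beta> (Suc i) * e ^ i)" by (simp add: sum_distrib_left algebra_simps)
    finally show ?thesis .
  qed
  define R where "R = R_pairs \<Phi> \<alpha> r lam"
  have finR: "finite R" using R_finite R_def by simp
  have finP: "finite P" using finite_subset[OF pos_sub finPhi] .
  have TTe: "(pairing (pe e) (fst h) - of_int (snd h)) / pairing lam (fst h) = peval (hmap \<omega> r lam h) e" for e h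
  proof -
    obtain \<beta> k where h: "h = (\<beta>, k)" by (cases h)
    show ?thesis unfolding h peval_hmap ppe by (simp add: algebra_simps)
  qed
  have ev1: "eventually (\<lambda>e. \<forall>h\<in>R \<times> R. lex_less (hmap \<omega> r lam (fst h)) (hmap \<omega> r lam (snd h)) \<longrightarrow>
        peval (hmap \<omega> r lam (fst h)) e < peval (hmap \<omega> r lam (snd h)) e) (at_right 0)"
  proof (rule eventually_ball_finite)
    show "finite (R \<times> R)" using finR by simp
  next
    show "\<forall>h\<in>R \<times> R. eventually (\<lambda>e. lex_less (hmap \<omega> r lam (fst h)) (hmap \<omega> r lam (snd h)) \<longrightarrow>
        peval (hmap \<omega> r lam (fst h)) e < peval (hmap \<omega> r lam (snd h)) e) (at_right 0)"
    proof
      fix h assume "h \<in> R \<times> R"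
      show "eventually (\<lambda>e. lex_less (hmap \<omega> r lam (fst h)) (hmap \<omega> r lam (snd h)) \<longrightarrow>
        peval (hmap \<omega> r lam (fst h)) e < peval (hmap \<omega> r lam (snd h)) e) (at_right 0)"
      proof (cases "lex_less (hmap \<omega> r lam (fst h)) (hmap \<omega> r lam (snd h))")
        case True
        have "eventually (\<lambda>e. peval (hmap \<omega> r lam (fst h)) e < peval (hmap \<omega> r lam (snd h)) e) (at_right 0)"
          using lex_eventually[OF _ True[unfolded lex_less_def]] hmap_len by simp
        then show ?thesis by (rule eventually_mono) simp
      qed simp
    qed
  qed
  have ev2: "eventually (\<lambda>e. \<forall>\<beta>\<in>P. 0 < pairing (pe e) \<beta> \<and> pairing (pe e) \<beta> < 1) (at_right 0)"
  proof (rule eventually_ball_finite[OF finP], rule ballI)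
    fix \<beta> assume b: "\<beta> \<in> P"
    have bP: "\<beta> \<in> \<Phi>" using b pos_sub by auto
    have t: "((\<lambda>e. e * (\<Sum>i<r. co \<beta> (Suc i) * e ^ i)) \<longlongrightarrow> 0 * (\<Sum>i<r. co \<beta> (Suc i) * 0 ^ i)) (at_right 0)"
      by (intro tendsto_intros)
    have e1: "eventually (\<lambda>e. pairing (pe e) \<beta> < 1) (at_right 0)"
      using order_tendstoD(2)[OF t, of 1] by (simp add: ppe)
    obtain j where j: "j \<in> {1..r}" "co \<beta> j \<noteq> 0" using co_nz[OF nz[OF bP]] by blast
    have cnn: "\<forall>i\<in>{1..r}. co \<beta> i \<ge> 0" using pos_iff[OF bP] b by blast
    have e2: "eventually (\<lambda>e. 0 < pairing (pe e) \<beta>) (at_right 0)"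
      using eventually_at_right_less[of "0::real"]
    proof (rule eventually_mono)
      fix e :: real assume e: "0 < e"
      obtain i where i: "j = Suc i" "i < r" using j by (cases j) auto
      have "0 < (\<Sum>i<r. co \<beta> (Suc i) * e ^ i)"
      proof (rule sum_pos2[of "{..<r}" i])
        have "co \<beta> j \<ge> 0" using cnn j(1) by blast
        then have "co \<beta> (Suc i) > 0" using j(2) i(1) by simp
        then show "0 < co \<beta> (Suc i) * e ^ i" using e by simp
      next
        fix k assume "k \<in> {..<r}" then have "Suc k \<in> {1..r}" by auto
        then show "0 \<le> co \<beta> (Suc k) * e ^ k" using cnn e by simp
      qed (use i in auto)
      then show "0 < pairing (pe e) \<beta>" using e by (simp add: ppe)
    qed
    show "eventually (\<lambda>e. 0 < pairing (pe e) \<beta> \<and> pairing (pe e) \<beta> < 1) (at_right 0)"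
      using eventually_conj[OF e2 e1] .
  qed
  obtain e where e: "\<forall>h\<in>R \<times> R. lex_less (hmap \<omega> r lam (fst h)) (hmap \<omega> r lam (snd h)) \<longrightarrow>
        peval (hmap \<omega> r lam (fst h)) e < peval (hmap \<omega> r lam (snd h)) e"
    "\<forall>\<beta>\<in>P. 0 < pairing (pe e) \<beta> \<and> pairing (pe e) \<beta> < 1"
    using eventually_happens'[OF _ eventually_conj[OF ev1 ev2]] by auto
  have "pe e \<in> A" using e(2) by (simp add: fund_alcove_def)
  moreover have "\<forall>h1\<in>R. \<forall>h2\<in>R. lex_less (hmap \<omega> r lam h1) (hmap \<omega> r lam h2) \<longrightarrow>
       (pairing (pe e) (fst h1) - of_int (snd h1)) / pairing lam (fst h1) < (pairing (pe e) (fst h2) - of_int (snd h2)) / pairing lam (fst h2)"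
    using e(1) unfolding TTe by auto
  ultimately show ?thesis unfolding R_def by blast
qed

end



theorem proposition6p7:
  fixes \<Phi> :: "'a::euclidean_space set" and \<alpha> \<omega> :: "nat \<Rightarrow> 'a" and r :: nat
    and \<theta> lam :: 'a
  assumes "root_system \<Phi>" and "irreducible_rs \<Phi>" and "is_base \<Phi> \<alpha> r"
    and "\<forall>i\<in>{1..r}. \<forall>j\<in>{1..r}. pairing (\<omega> i) (\<alpha> j) = (if i = j then 1 else 0)"
    and "highest_coroot_root \<Phi> \<alpha> r \<theta>"
    and "lam \<in> weight_lattice \<Phi>"
  shows "inj_on (hmap \<omega> r lam) (R_pairs \<Phi> \<alpha> r lam) \<and>
    (\<forall>ps. set ps = R_pairs \<Phi> \<alpha> r lam \<and>
          sorted_wrt (\<lambda>p q. lex_less (hmap \<omega> r lam p) (hmap \<omega> r lam q)) ps \<longrightarrow>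
       (\<exists>w. reduced_decomp \<alpha> \<theta> r (v_minus \<Phi> \<alpha> r \<theta> lam) w \<and>
            chain_refl \<alpha> \<theta> w = map (\<lambda>(\<beta>, k). saff \<beta> (of_int k)) ps \<and>
            chain_roots \<alpha> \<theta> w = map bmap ps))"
proof -
  interpret RS \<Phi> \<alpha> \<omega> r \<theta> using assms(1,3,4,5) by unfold_locales
  have wl: "lam \<in> weight_lattice \<Phi>" by (rule assms(6))
  have lamint: "\<forall>\<beta>\<in>\<Phi>. pairing lam \<beta> \<in> \<int>" using wl by (simp add: weight_lattice_def)
  have part2: "\<exists>w. reduced_decomp \<alpha> \<theta> r (v_minus \<Phi> \<alpha> r \<theta> lam) w \<and>
            chain_refl \<alpha> \<theta> w = map (\<lambda>(\<beta>, k). saff \<beta> (of_int k)) ps \<and>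
            chain_roots \<alpha> \<theta> w = map bmap ps"
    if ps: "set ps = R_pairs \<Phi> \<alpha> r lam" "sorted_wrt (\<lambda>p q. lex_less (hmap \<omega> r lam p) (hmap \<omega> r lam q)) ps" for ps
  proof -
    obtain p where pA: "p \<in> A" and pl: "\<forall>h1\<in>R_pairs \<Phi> \<alpha> r lam. \<forall>h2\<in>R_pairs \<Phi> \<alpha> r lam.
       lex_less (hmap \<omega> r lam h1) (hmap \<omega> r lam h2) \<longrightarrow>
       (pairing p (fst h1) - of_int (snd h1)) / pairing lam (fst h1) < (pairing p (fst h2) - of_int (snd h2)) / pairing lam (fst h2)"
      using exists_p[OF wl] by blast
    have srt: "sorted_wrt (\<lambda>h1 h2. (pairing p (fst h1) - of_int (snd h1)) / pairing lam (fst h1)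
                              < (pairing p (fst h2) - of_int (snd h2)) / pairing lam (fst h2)) ps"
      using ps(2) by (rule sorted_wrt_mono_rel[rotated]) (use pl ps(1) in blast)
    interpret PA: PATH \<Phi> \<alpha> \<omega> r \<theta> lam p ps
      by (unfold_locales; (rule wl pA ps(1) srt)?)
    obtain w where w: "length w = length ps" "set w \<subseteq> {0..r}" "\<forall>j<length ps. PA.CH w j"
      "wprod \<alpha> \<theta> (rev w) (p - lam) \<in> A"
      using PA.path_final by blast
    define V where "V = wprod \<alpha> \<theta> w"
    have rw: "set (rev w) \<subseteq> {0..r}" using w(2) by simp
    have tr1: "good (\<lambda>x. x - lam)"
    proof -
      have "\<forall>\<beta>\<in>\<Phi>. pairing (- lam) \<beta> \<in> \<int>" using lamint by (simp add: pairing_uminus1)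
      then have "good (\<lambda>x. x + - lam)" by (rule good_trans)
      then show ?thesis by simp
    qed
    have tr2: "good (\<lambda>x. x + lam)" using good_trans lamint by blast
    define g' where "g' = wprod \<alpha> \<theta> (rev w) \<circ> (\<lambda>x. x - lam)"
    have gg': "good g'" unfolding g'_def by (rule good_comp[OF good_wprod[OF rw] tr1])
    have g'p: "g' p \<in> A" using w(4) by (simp add: g'_def)
    have g'A: "g' x \<in> A" if "x \<in> A" for x using good_A[OF gg' pA that g'p] .
    define g where "g = (\<lambda>x. x + lam) \<circ> V"
    have gg: "good g" unfolding g_def V_def by (rule good_comp[OF tr2 good_wprod[OF w(2)]])
    have Vg': "V (g' x) = x - lam" for x unfolding V_def g'_def using wprod_inv_rev[OF w(2)] by simp
    have gg'p: "g (g' p) \<in> A" using Vg'[of p] pA by (simp add: g_def)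
    have gA: "g y \<in> A" if "y \<in> A" for y using good_A[OF gg g'p that gg'p] .
    have VA: "V ` A = (\<lambda>x. x - lam) ` A"
    proof
      show "V ` A \<subseteq> (\<lambda>x. x - lam) ` A"
      proof
        fix v assume "v \<in> V ` A"
        then obtain y where y: "y \<in> A" "v = V y" by blast
        have "V y + lam \<in> A" using gA[OF y(1)] by (simp add: g_def)
        then show "v \<in> (\<lambda>x. x - lam) ` A" using y(2) by (intro image_eqI[of _ _ "V y + lam"]) simp_all
      qed
    next
      show "(\<lambda>x. x - lam) ` A \<subseteq> V ` A"
      proof
        fix v assume "v \<in> (\<lambda>x. x - lam) ` A"
        then obtain x where x: "x \<in> A" "v = x - lam" by blast
        then show "v \<in> V ` A" using Vg'[of x] g'A[OF x(1)] by (metis image_eqI)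
      qed
    qed
    have VW: "V \<in> W_aff \<alpha> \<theta> r" unfolding W_aff_def V_def using w(2) by blast
    have uniq: "v = V" if v: "v \<in> W_aff \<alpha> \<theta> r" "v ` A = (\<lambda>x. x - lam) ` A" for v
    proof -
      obtain w' where w': "v = wprod \<alpha> \<theta> w'" "set w' \<subseteq> {0..r}" using v(1) by (auto simp: W_aff_def)
      have "v p \<in> V ` A" using v(2) VA pA by blast
      then obtain y where y: "y \<in> A" "v p = V y" by blast
      have sw: "set (rev w @ w') \<subseteq> {0..r}" using w(2) w'(2) by auto
      have "wprod \<alpha> \<theta> (rev w @ w') p = wprod \<alpha> \<theta> (rev w) (v p)" using w'(1) by (simp add: wprod_append)
      also have "\<dots> = y" using y(2) wprod_rev_inv[OF w(2)] V_def by simp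
      finally have "wprod \<alpha> \<theta> (rev w @ w') p \<in> A" using y(1) by simp
      then have idw: "wprod \<alpha> \<theta> (rev w @ w') = id" using stab[OF sw pA] by blast
      show ?thesis
      proof
        fix x
        have "wprod \<alpha> \<theta> (rev w) (v x) = x" using fun_cong[OF idw, of x] w'(1) by (simp add: wprod_append)
        then have "V (wprod \<alpha> \<theta> (rev w) (v x)) = V x" by simp
        then show "v x = V x" using wprod_inv_rev[OF w(2), of "v x"] V_def by simp
      qed
    qed
    have vm: "v_minus \<Phi> \<alpha> r \<theta> lam = V"
      unfolding v_minus_def
    proof (rule the_equality)
      show "V \<in> W_aff \<alpha> \<theta> r \<and> V ` A = (\<lambda>x. x - lam) ` A" using VW VA by blast
    next
      fix v assume "v \<in> W_aff \<alpha> \<theta> r \<and> v ` A = (\<lambda>x. x - lam) ` A"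
      then show "v = V" using uniq by blast
    qed
    have dist: "distinct ps"
      using ps(2) by (rule sorted_wrt_distinct) (simp add: lex_less_def lexord_irreflexive)
    have cardR: "card (R_pairs \<Phi> \<alpha> r lam) = length ps" using distinct_card[OF dist] ps(1) by simp
    have sepV: "sep V p = R_pairs \<Phi> \<alpha> r lam"
    proof -
      have "V p \<in> (\<lambda>x. x - lam) ` A" using VA pA by blast
      then obtain y where y: "y \<in> A" "V p = y - lam" by blast
      show ?thesis
      proof (rule set_eqI)
        fix h :: "'a \<times> int"
        obtain \<beta> k where h: "h = (\<beta>, k)" by (cases h)
        show "h \<in> sep V p \<longleftrightarrow> h \<in> R_pairs \<Phi> \<alpha> r lam"
        proof (cases "\<beta> \<in> P")
          case False then show ?thesis by (simp add: h sep_def R_pairs_def)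
        next
          case True
          obtain n :: int where n: "pairing lam \<beta> = of_int n" using lamint True pos_sub by (blast elim: Ints_obtain)
          have "pairing (V p) \<beta> > of_int k \<longleftrightarrow> pairing y \<beta> > of_int (k + n)"
            using y(2) n by (simp add: pairing_diff) linarith
          also have "\<dots> \<longleftrightarrow> k + n \<le> 0" using int_side[of 0 "pairing y \<beta>" "k + n"] A_pair[OF y(1) True] by simp
          finally have e: "pairing (V p) \<beta> > of_int k \<longleftrightarrow> k + n \<le> 0" .
          have "((k + n \<le> 0) \<noteq> (k \<le> 0)) \<longleftrightarrow> ((n > 0 \<and> 0 \<ge> k \<and> k > - n) \<or> (n < 0 \<and> 0 < k \<and> k \<le> - n))" by auto
          moreover have "(- real_of_int n < real_of_int k) = (- n < k)" "(real_of_int k \<le> - real_of_int n) = (k \<le> - n)"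
            by linarith+
          ultimately show ?thesis using True n e by (simp add: h sep_def R_pairs_def)
        qed
      qed
    qed
    have red: "reduced_decomp \<alpha> \<theta> r V w"
      unfolding reduced_decomp_def
    proof (intro conjI allI impI)
      show "set w \<subseteq> {0..r}" by (rule w(2))
      show "wprod \<alpha> \<theta> w = V" by (simp add: V_def)
    next
      fix w' assume w': "set w' \<subseteq> {0..r} \<and> wprod \<alpha> \<theta> w' = V"
      have "card (sep (wprod \<alpha> \<theta> w') p) \<le> length w'" using sep_card[OF conjunct1[OF w'] pA] by blast
      then show "length w \<le> length w'" using w' sepV cardR w(1) by simp
    qed
    have cr: "chain_refl \<alpha> \<theta> w = map (\<lambda>(\<beta>, k). saff \<beta> (of_int k)) ps"
    proof (rule nth_equalityI)
      show "length (chain_refl \<alpha> \<theta> w) = length (map (\<lambda>(\<beta>, k). saff \<beta> (of_int k)) ps)"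
        using w(1) by (simp add: chain_refl_def)
    next
      fix j assume j: "j < length (chain_refl \<alpha> \<theta> w)"
      then have jl: "j < length w" by (simp add: chain_refl_def)
      have tj: "set (take j w) \<subseteq> {0..r}" using w(2) by (meson order_trans set_take_subset)
      have ch: "PA.CH w j" using w(3) jl w(1) by simp
      have "wprod \<alpha> \<theta> (take (Suc j) w @ rev (take j w)) = wprod \<alpha> \<theta> (take j w) \<circ> sgen \<alpha> \<theta> (w ! j) \<circ> wprod \<alpha> \<theta> (rev (take j w))"
        by (simp add: wprod_append wprod_take_Suc[OF jl])
      also have "\<dots> = saff (fst (ps ! j)) (of_int (snd (ps ! j))) \<circ> wprod \<alpha> \<theta> (take j w) \<circ> wprod \<alpha> \<theta> (rev (take j w))"
        using ch by (simp add: PA.CH_def)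
      also have "\<dots> = saff (fst (ps ! j)) (of_int (snd (ps ! j)))"
        using wprod_inv_rev[OF tj] by (simp add: fun_eq_iff)
      finally show "chain_refl \<alpha> \<theta> w ! j = map (\<lambda>(\<beta>, k). saff \<beta> (of_int k)) ps ! j"
        using jl w(1) by (simp add: chain_refl_def case_prod_beta)
    qed
    have ro: "chain_roots \<alpha> \<theta> w = map bmap ps"
    proof (rule nth_equalityI)
      show "length (chain_roots \<alpha> \<theta> w) = length (map bmap ps)" using w(1) by (simp add: chain_roots_def)
    next
      fix j assume j: "j < length (chain_roots \<alpha> \<theta> w)"
      then have jl: "j < length w" by (simp add: chain_roots_def)
      have ch: "PA.CH w j" using w(3) jl w(1) by simp
      then show "chain_roots \<alpha> \<theta> w ! j = map bmap ps ! j"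
        using jl w(1) by (simp add: chain_roots_def PA.CH_def)
    qed
    show ?thesis using red cr ro vm by auto
  qed
  show ?thesis using hmap_inj part2 by blast
qed


end
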